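(* Let $(K,w_K)$ and $(H,w_H)$ be $(n+1)$-dimensional weighted simplicial complexes such that $(H,w_H)$ is a subcomplex of $(K,w_K)$ and their proper difference $(L,w_L)$ exists, i.e. $L=K$ as simplicial complexes, $w_L=w_K-w_H$ (with $w_H$ extended by $0$ outside $H$), and $\{F\in K:w_L(F)>0\}$ is a simplicial complex. Assume $w_K$ and $w_L$ both satisfy the normalizing condition, and denote by $\Delta^{up}_n(K)$, $\Delta^{up}_n(L)$ the corresponding (normalized) up-Laplacians $\mathcal{L}^{up}_n(K,w_K)$, $\mathcal{L}^{up}_n(L,w_L)$. Let $N=|S_n(K)|$ and let $\lambda_1\le\dots\le\lambda_N$ and $\theta_1\le\dots\le\theta_N$ be the eigenvalues of $\Delta^{up}_n(K)$ and $\Delta^{up}_n(L)$, respectively. Put $D_{\mathcal{W}}=\dim C^{n+1}(H,\mathbb{R})-\dim H^{n+1}(H,\mathbb{R})$ and $D_H=\dim C^n(H,\mathbb{R})$, with the conventions $\lambda_j=0$ for $1-D_{\mathcal{W}}\le j\le 0$ and $\lambda_j=n+2$ for $N+1\le j\le N+D_H$. Then for all $k=1,\dots,N$, $$\lambda_{k-D_{\mathcal{W}}}\le\theta_k\le\lambda_{k+D_H}.$$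
   Context: $S_j(K)$ is the set of $j$-faces; $C^j(K,\mathbb{R})$ the real cochains on oriented $j$-faces with coboundary $(\delta_j f)([v_0,\dots,v_{j+1}])=\sum_i(-1)^if([v_0,\dots,\hat v_i,\dots,v_{j+1}])$. A weight function $w:\bigcup_jS_j(K)\to[0,\infty)$ (positive for a weighted complex, zeros allowed for a degenerate one) gives $(f,g)=\sum_{F\in S_j}w(F)f([F])g([F])$ and the formal adjoint $(\delta_j^*\bar f)([F])=\sum_{\bar F\in S_{j+1},\bar F\supset F}\frac{w(\bar F)}{w(F)}\mathrm{sgn}([F],\partial[\bar F])\bar f([\bar F])$ if $w(F)\ne0$, and $0$ if $w(F)=0$, where $\mathrm{sgn}([v_0,..,\hat v_i,..,v_{j+1}],\partial[v_0,..,v_{j+1}])=(-1)^i$. $\mathcal{L}^{up}_n(K,w)=\delta_n^*\delta_n$ on $C^n$. A subcomplex $(H,w_H)$ of $(K,w_K)$ means $H\subseteq K$ a subcomplex and $w_H\le w_K$ on faces of $H$. A weight function $w$ satisfies the normalizing condition if $w(F)=\sum_{\bar F\in S_{n+1}(K),\,F\subset\bar F}w(\bar F)$ for every $F\in S_n(K)$ that is not a facet (maximal face) of $K$; the up-Laplacian for such weights is the normalized up-Laplacian $\Delta^{up}_n$. $H^{n+1}(H,\mathbb{R})$ is simplicial cohomology with real coefficients. *)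

theory Defs
  imports "HOL-Analysis.Analysis" "HOL-Library.Function_Algebras" "Jordan_Normal_Form.Char_Poly"
begin

text \<open>Each face is oriented canonically by the increasing order of its vertices; a cochain on
  oriented j-faces is determined by its values on these canonical orientations, so
  cochains are represented as real functions on vertex sets (vanishing off S_j).\<close>

definition simplicial_complex :: "'v set set \<Rightarrow> bool" where
  "simplicial_complex K \<longleftrightarrow> finite K \<and> (\<forall>F\<in>K. finite F \<and> F \<noteq> {}) \<and>
     (\<forall>F\<in>K. \<forall>G. G \<subseteq> F \<and> G \<noteq> {} \<longrightarrow> G \<in> K)"

definition faces :: "nat \<Rightarrow> 'v set set \<Rightarrow> 'v set set" where
  "faces j K = {F\<in>K. card F = Suc j}"

definition complex_dim :: "'v set set \<Rightarrow> nat \<Rightarrow> bool" where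
  "complex_dim K d \<longleftrightarrow> faces d K \<noteq> {} \<and> (\<forall>F\<in>K. card F \<le> Suc d)"

definition weighted_complex :: "'v set set \<Rightarrow> ('v set \<Rightarrow> real) \<Rightarrow> bool" where
  "weighted_complex K w \<longleftrightarrow> simplicial_complex K \<and> (\<forall>F\<in>K. w F > 0)"

definition sub_wcomplex ::
  "'v set set \<Rightarrow> ('v set \<Rightarrow> real) \<Rightarrow> 'v set set \<Rightarrow> ('v set \<Rightarrow> real) \<Rightarrow> bool" where
  "sub_wcomplex H wH K wK \<longleftrightarrow> simplicial_complex H \<and> H \<subseteq> K \<and> (\<forall>F\<in>H. wH F \<le> wK F)"

definition diff_weight ::
  "'v set set \<Rightarrow> ('v set \<Rightarrow> real) \<Rightarrow> 'v set set \<Rightarrow> ('v set \<Rightarrow> real) \<Rightarrow> 'v set \<Rightarrow> real" where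
  "diff_weight K wK H wH F = (if F \<in> K then wK F - (if F \<in> H then wH F else 0) else 0)"

definition proper_difference_exists ::
  "'v set set \<Rightarrow> ('v set \<Rightarrow> real) \<Rightarrow> 'v set set \<Rightarrow> ('v set \<Rightarrow> real) \<Rightarrow> bool" where
  "proper_difference_exists K wK H wH \<longleftrightarrow>
     simplicial_complex {F\<in>K. diff_weight K wK H wH F > 0}"

definition is_facet :: "'v set set \<Rightarrow> 'v set \<Rightarrow> bool" where
  "is_facet K F \<longleftrightarrow> F \<in> K \<and> \<not> (\<exists>G\<in>K. F \<subset> G)"

definition normalizing :: "'v set set \<Rightarrow> ('v set \<Rightarrow> real) \<Rightarrow> nat \<Rightarrow> bool" where
  "normalizing K w n \<longleftrightarrow>
     (\<forall>F\<in>faces n K. \<not> is_facet K F \<longrightarrow> w F = (\<Sum>G\<in>{G\<in>faces (Suc n) K. F \<subset> G}. w G))"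

definition vidx :: "'v::linorder \<Rightarrow> 'v set \<Rightarrow> nat" where
  "vidx v G = card {u\<in>G. u < v}"

text \<open>sgn([F], boundary [G]) for F a codimension-one face of G.\<close>
definition inc_sign :: "'v::linorder set \<Rightarrow> 'v set \<Rightarrow> real" where
  "inc_sign F G = (-1) ^ vidx (the_elem (G - F)) G"

definition cobdry :: "'v::linorder set set \<Rightarrow> nat \<Rightarrow> ('v set \<Rightarrow> real) \<Rightarrow> 'v set \<Rightarrow> real" where
  "cobdry K j f G = (if G \<in> faces (Suc j) K
      then (\<Sum>v\<in>G. (-1) ^ vidx v G * f (G - {v})) else 0)"

text \<open>Formal adjoint delta_j^* : C^(j+1)(K) \<rightarrow> C^j(K) w.r.t. the weighted inner products
  (zero on faces of weight zero).\<close>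
definition cobdry_adj ::
  "'v::linorder set set \<Rightarrow> ('v set \<Rightarrow> real) \<Rightarrow> nat \<Rightarrow> ('v set \<Rightarrow> real) \<Rightarrow> 'v set \<Rightarrow> real" where
  "cobdry_adj K w j g F = (if F \<in> faces j K \<and> w F \<noteq> 0
      then (\<Sum>G\<in>{G\<in>faces (Suc j) K. F \<subseteq> G}. (w G / w F) * inc_sign F G * g G) else 0)"

definition up_laplacian ::
  "'v::linorder set set \<Rightarrow> ('v set \<Rightarrow> real) \<Rightarrow> nat \<Rightarrow> ('v set \<Rightarrow> real) \<Rightarrow> 'v set \<Rightarrow> real" where
  "up_laplacian K w n f = cobdry_adj K w n (cobdry K n f)"

text \<open>An (arbitrary, fixed) enumeration of a finite set; spectra do not depend on it.\<close>
definition face_enum :: "'a set \<Rightarrow> nat \<Rightarrow> 'a" where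
  "face_enum S = (SOME e. bij_betw e {..<card S} S)"

definition up_laplacian_matrix ::
  "'v::linorder set set \<Rightarrow> ('v set \<Rightarrow> real) \<Rightarrow> nat \<Rightarrow> real mat" where
  "up_laplacian_matrix K w n =
     (let N = card (faces n K); e = face_enum (faces n K)
      in mat N N (\<lambda>(i,k). up_laplacian K w n (\<lambda>F. if F = e k then 1 else 0) (e i)))"

definition sorted_eigenvalues :: "real mat \<Rightarrow> nat \<Rightarrow> (nat \<Rightarrow> real) \<Rightarrow> bool" where
  "sorted_eigenvalues M N lam \<longleftrightarrow>
     (\<forall>i j. 1 \<le> i \<longrightarrow> i \<le> j \<longrightarrow> j \<le> N \<longrightarrow> lam i \<le> lam j) \<and>
     char_poly M = (\<Prod>i\<in>{1..N}. [:- lam i, 1:])"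

definition rdim :: "('v set \<Rightarrow> real) set \<Rightarrow> nat" where
  "rdim S = vector_space.dim (\<lambda>c f. (\<lambda>x. c * f x)) S"

definition cochains :: "nat \<Rightarrow> 'v set set \<Rightarrow> ('v set \<Rightarrow> real) set" where
  "cochains j K = {f. \<forall>F. F \<notin> faces j K \<longrightarrow> f F = 0}"

definition cocycles :: "nat \<Rightarrow> 'v::linorder set set \<Rightarrow> ('v set \<Rightarrow> real) set" where
  "cocycles j K = {f\<in>cochains j K. cobdry K j f = (\<lambda>_. 0)}"

definition coboundaries :: "nat \<Rightarrow> 'v::linorder set set \<Rightarrow> ('v set \<Rightarrow> real) set" where
  "coboundaries j K = (if j = 0 then {\<lambda>_. 0} else cobdry K (j - 1) ` cochains (j - 1) K)"

definition cohom_dim :: "nat \<Rightarrow> 'v::linorder set set \<Rightarrow> nat" where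
  "cohom_dim j K = rdim (cocycles j K) - rdim (coboundaries j K)"

definition ext_eig :: "nat \<Rightarrow> real \<Rightarrow> (nat \<Rightarrow> real) \<Rightarrow> int \<Rightarrow> real" where
  "ext_eig N t lam j = (if j \<le> 0 then 0 else if j > int N then t else lam (nat j))"

end

theory Submission
  imports Defs "Jordan_Normal_Form.Schur_Decomposition"
begin

no_notation Inner_Product.real_inner_class.inner (infix "\<bullet>" 70)



definition diag_of :: "nat \<Rightarrow> real list \<Rightarrow> real mat" where
  "diag_of n es = mat n n (\<lambda>(i,j). if i = j then es ! i else 0)"

lemma real_scalar_prod_self_ge0: "(v::real vec) \<bullet> v \<ge> 0"
  unfolding scalar_prod_def by (auto intro: sum_nonneg)

lemma real_conj_prod: "(v::real vec) \<bullet>c w = v \<bullet> w"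
  unfolding scalar_prod_def by simp

theorem real_sym_spectral:
  fixes A :: "real mat"
  assumes "A \<in> carrier_mat n n" "transpose_mat A = A"
    "char_poly A = (\<Prod>e\<leftarrow>es. [:- e, 1:])"
  shows "\<exists>U \<in> carrier_mat n n. transpose_mat U * U = 1\<^sub>m n \<and>
           transpose_mat U * A * U = diag_of n es"
  using assms
proof (induct es arbitrary: n A)
  case Nil
  with degree_monic_char_poly[of A n] have "n = 0" by auto
  thus ?case using Nil by (intro bexI[of _ "1\<^sub>m 0"], auto intro!: eq_matI simp: diag_of_def)
next
  case (Cons e es n A)
  from Cons have A: "A \<in> carrier_mat n n" and sym: "transpose_mat A = A" by auto
  let ?n1 = "n - 1"
  have cp: "char_poly A = [: -e, 1 :] * (\<Prod>e \<leftarrow> es. [:- e, 1:])" using Cons by auto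
  have mon: "monic (\<Prod>e\<leftarrow> es. [:- e, 1:])" by (rule monic_prod_list, auto)
  have deg: "degree (char_poly A) = Suc (degree (\<Prod>e\<leftarrow> es. [:- e, 1:]))" unfolding cp
    by (subst degree_mult_eq, insert mon, auto)
  with degree_monic_char_poly[OF A] have n: "n \<noteq> 0" by auto
  have e: "eigenvalue A e" 
    unfolding eigenvalue_root_char_poly[OF A] cp by simp
  define v where "v = find_eigenvector A e"
  from find_eigenvector[OF A e] have ev: "eigenvector A v e" unfolding v_def .
  from this[unfolded eigenvector_def]
  have v[simp]: "v \<in> carrier_vec n" and v0: "v \<noteq> 0\<^sub>v n" and Av: "A *\<^sub>v v = e \<cdot>\<^sub>v v" using A by auto
  interpret cof_vec_space n "TYPE(real)" .
  define b where "b = basis_completion v"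
  define ws where "ws = gram_schmidt n b"
  from basis_completion[OF v v0, folded b_def]
  have span_b: "span (set b) = carrier_vec n" and dist_b: "distinct b" 
    and indep: "\<not> lin_dep (set b)" and b: "set b \<subseteq> carrier_vec n" and hdb: "hd b = v" 
    and len_b: "length b = n" by auto
  from hdb len_b n obtain vs where bv: "b = v # vs" by (cases b, auto)
  from gram_schmidt_result[OF b dist_b indep refl, folded ws_def]
  have ws: "set ws \<subseteq> carrier_vec n" "corthogonal ws" "length ws = n" 
    by (auto simp: len_b)
  from gram_schmidt_hd[OF v, of vs, folded bv] have hdws: "hd ws = v" unfolding ws_def .
  have ws0: "ws ! 0 = v" using hdws ws(3) n by (cases ws, auto)
  define nf where "nf w = (1 / sqrt (w \<bullet> w)) \<cdot>\<^sub>v (w :: real vec)" for w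
  define ws' where "ws' = map nf ws"
  have wsc: "i < n \<Longrightarrow> ws ! i \<in> carrier_vec n" for i using ws by auto
  have wspos: "i < n \<Longrightarrow> ws ! i \<bullet> ws ! i > 0" for i
    using corthogonalD[OF ws(2), of i i] ws(3) real_scalar_prod_self_ge0[of "ws ! i"]
    by (auto simp: real_conj_prod)
  have wsorth: "i < n \<Longrightarrow> j < n \<Longrightarrow> i \<noteq> j \<Longrightarrow> ws ! i \<bullet> ws ! j = 0" for i j
    using corthogonalD[OF ws(2), of i j] ws(3) by (auto simp: real_conj_prod)
  have ws'c: "i < n \<Longrightarrow> ws' ! i \<in> carrier_vec n" for i using wsc ws(3) by (auto simp: ws'_def nf_def)
  have ws'orth: "i < n \<Longrightarrow> j < n \<Longrightarrow> ws' ! i \<bullet> ws' ! j = (if i = j then 1 else 0)" for i j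
  proof -
    assume i: "i < n" and j: "j < n"
    have "ws' ! i \<bullet> ws' ! j = (1 / sqrt (ws ! i \<bullet> ws ! i)) * (1 / sqrt (ws ! j \<bullet> ws ! j)) * (ws ! i \<bullet> ws ! j)"
      using i j ws(3) wsc[OF i] wsc[OF j] by (simp add: ws'_def nf_def)
    also have "\<dots> = (if i = j then 1 else 0)"
      using wspos[OF i] wsorth[OF i j]
      by (cases "i = j") (auto simp: real_sqrt_mult[symmetric] field_simps)
    finally show ?thesis .
  qed
  define W where "W = mat_of_cols n ws'"
  have W: "W \<in> carrier_mat n n" unfolding W_def using ws(3) by (auto simp: ws'_def)
  have colW: "i < n \<Longrightarrow> col W i = ws' ! i" for i unfolding W_def
    using ws(3) ws'c[of i] col_mat_of_cols[of i ws' n] by (simp add: ws'_def)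
  have WtW: "transpose_mat W * W = 1\<^sub>m n"
    by (rule eq_matI, insert W, auto simp: colW ws'orth)
  have WWt: "W * transpose_mat W = 1\<^sub>m n"
    using mat_mult_left_right_inverse[OF _ W WtW] W by auto
  define A' where "A' = transpose_mat W * A * W"
  have A': "A' \<in> carrier_mat n n" using W A unfolding A'_def by auto
  have symA': "transpose_mat A' = A'"
  proof -
    have "transpose_mat A' = transpose_mat W * transpose_mat (transpose_mat W * A)"
      unfolding A'_def by (rule transpose_mult, insert W A, auto)
    also have "transpose_mat (transpose_mat W * A) = transpose_mat A * W"
      by (subst transpose_mult, insert W A, auto)
    finally show ?thesis unfolding A'_def sym using W A
      by (simp add: assoc_mult_mat[of _ n n _ n _ n])
  qed
  have u0: "ws' ! 0 = nf v" using ws0 ws(3) n by (simp add: ws'_def)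
  have Au0: "A *\<^sub>v (ws' ! 0) = e \<cdot>\<^sub>v (ws' ! 0)"
  proof -
    have "A *\<^sub>v nf v = (1 / sqrt (v \<bullet> v)) \<cdot>\<^sub>v (e \<cdot>\<^sub>v v)"
      using mult_mat_vec[OF A v] Av by (simp add: nf_def)
    also have "\<dots> = e \<cdot>\<^sub>v nf v" by (simp add: nf_def smult_smult_assoc)
    finally show ?thesis unfolding u0 .
  qed
  have A'col: "i < n \<Longrightarrow> A' $$ (i, 0) = (if i = 0 then e else 0)" for i
  proof -
    assume i: "i < n"
    have A'eq: "A' = transpose_mat W * (A * W)" unfolding A'_def
      using assoc_mult_mat[of "transpose_mat W" n n A n W n] W A by simp
    have "A' $$ (i, 0) = row (transpose_mat W) i \<bullet> col (A * W) 0"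
      unfolding A'eq using W A i n by (subst index_mult_mat, auto)
    also have "row (transpose_mat W) i = col W i" using W i by (simp add: row_transpose)
    also have "col (A * W) 0 = A *\<^sub>v col W 0" using W A n by (intro col_mult2[of _ n n _ n], auto)
    finally have "A' $$ (i, 0) = col W i \<bullet> (A *\<^sub>v col W 0)" .
    also have "\<dots> = e * (ws' ! i \<bullet> ws' ! 0)" using i n colW Au0 ws'c[OF i] ws'c[of 0] by (simp add: scalar_prod_smult_distrib[of _ n])
    finally show ?thesis using ws'orth[OF i, of 0] n by simp
  qed
  have A'row: "j < n \<Longrightarrow> A' $$ (0, j) = (if j = 0 then e else 0)" for j
    using A'col[of j] arg_cong[OF symA', of "\<lambda>M. M $$ (j,0)"] A' n by auto
  define A3 where "A3 = mat ?n1 ?n1 (\<lambda>(i,j). A' $$ (Suc i, Suc j))"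
  have A3: "A3 \<in> carrier_mat ?n1 ?n1" unfolding A3_def by auto
  define A1 where "A1 = mat 1 1 (\<lambda>_. e)"
  have A1: "A1 \<in> carrier_mat 1 1" unfolding A1_def by auto
  have A'block: "A' = four_block_mat A1 (0\<^sub>m 1 ?n1) (0\<^sub>m ?n1 1) A3"
    by (rule eq_matI, insert A' n A'col A'row, auto simp: A1_def A3_def)
  have symA3: "transpose_mat A3 = A3"
    by (rule eq_matI, insert A3 symA' A', auto simp: A3_def,
        metis Suc_less_eq Suc_pred index_transpose_mat(1) n neq0_conv carrier_matD)
  have A'A_wit: "similar_mat_wit A' A (transpose_mat W) W"
    by (rule similar_mat_witI[of _ _ n], insert W A A' WtW WWt, auto simp: A'_def)
  hence A'A: "similar_mat A' A" unfolding similar_mat_def by blast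
  from cp char_poly_similar[OF A'A]
  have "char_poly A' = [: -e,1 :] * (\<Prod> e \<leftarrow> es. [:- e, 1:])" by simp
  also have "char_poly A' = char_poly A1 * char_poly A3" 
    unfolding A'block
    by (rule char_poly_four_block_zeros_col[OF A1 _ A3], auto)
  also have "char_poly A1 = [: -e,1 :]"
    by (simp add: A1_def char_poly_defs det_def sign_def)
  finally have cp3: "char_poly A3 = (\<Prod> e \<leftarrow> es. [:- e, 1:])"
    by (metis mult_cancel_left pCons_eq_0_iff zero_neq_one)
  from Cons(1)[OF A3 symA3 cp3] obtain U3 where U3: "U3 \<in> carrier_mat ?n1 ?n1"
    and U3o: "transpose_mat U3 * U3 = 1\<^sub>m ?n1" and U3d: "transpose_mat U3 * A3 * U3 = diag_of ?n1 es"
    by auto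
  define B where "B = four_block_mat (1\<^sub>m 1) (0\<^sub>m 1 ?n1) (0\<^sub>m ?n1 1) U3"
  have nn: "1 + ?n1 = n" using n by auto
  have B: "B \<in> carrier_mat n n" unfolding B_def using U3 four_block_carrier_mat[of "1\<^sub>m 1" 1 1 U3 ?n1 ?n1] nn by auto
  have Bt: "transpose_mat B = four_block_mat (1\<^sub>m 1) (0\<^sub>m 1 ?n1) (0\<^sub>m ?n1 1) (transpose_mat U3)"
    unfolding B_def by (subst transpose_four_block_mat, insert U3, auto)
  have BtB: "transpose_mat B * B = 1\<^sub>m n"
    unfolding Bt unfolding B_def
    by (subst mult_four_block_mat, insert U3 U3o nn, auto)
  have BtA'B: "transpose_mat B * A' * B = four_block_mat A1 (0\<^sub>m 1 ?n1) (0\<^sub>m ?n1 1) (diag_of ?n1 es)"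
    unfolding Bt unfolding B_def A'block U3d[symmetric]
    by (subst mult_four_block_mat, insert U3 A1 A3, auto, subst mult_four_block_mat, insert U3 A1 A3, auto)
  define U where "U = W * B"
  have U: "U \<in> carrier_mat n n" unfolding U_def using W B by auto
  have Ut: "transpose_mat U = transpose_mat B * transpose_mat W" unfolding U_def using W B by (simp add: transpose_mult)
  have "transpose_mat U * U = transpose_mat B * (transpose_mat W * W) * B"
    unfolding Ut unfolding U_def using W B by (simp add: assoc_mult_mat[of _ n n _ n _ n])
  hence UtU: "transpose_mat U * U = 1\<^sub>m n" using WtW BtB B by simp
  have "transpose_mat U * A * U = transpose_mat B * A' * B"
    unfolding Ut unfolding U_def A'_def using W B A by (simp add: assoc_mult_mat[of _ n n _ n _ n])
  also have "\<dots> = diag_of n (e # es)"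
    unfolding BtA'B by (rule eq_matI, insert nn, auto simp: diag_of_def A1_def)
  finally show ?case using U UtU by blast
qed






definition en :: "'v set set \<Rightarrow> nat \<Rightarrow> nat \<Rightarrow> 'v set" where
  "en K n = face_enum (faces n K)"
definition cc :: "'v::linorder set set \<Rightarrow> nat \<Rightarrow> nat \<Rightarrow> 'v set \<Rightarrow> real" where
  "cc K n i G = (if en K n i \<subseteq> G then inc_sign (en K n i) G else 0)"
definition aa :: "'v::linorder set set \<Rightarrow> ('v set \<Rightarrow> real) \<Rightarrow> nat \<Rightarrow> nat \<Rightarrow> nat \<Rightarrow> real" where
  "aa K w n i k = (\<Sum>G\<in>faces (Suc n) K. w G * cc K n i G * cc K n k G)"
definition bq :: "'v::linorder set set \<Rightarrow> ('v set \<Rightarrow> real) \<Rightarrow> nat \<Rightarrow> ('v set \<Rightarrow> real) \<Rightarrow> ('v set \<Rightarrow> real) \<Rightarrow> real" where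
  "bq K w n f g = (\<Sum>G\<in>faces (Suc n) K. w G * cobdry K n f G * cobdry K n g G)"
definition ip :: "'v set set \<Rightarrow> nat \<Rightarrow> ('v set \<Rightarrow> real) \<Rightarrow> ('v set \<Rightarrow> real) \<Rightarrow> ('v set \<Rightarrow> real) \<Rightarrow> real" where
  "ip K n u f g = (\<Sum>F\<in>faces n K. u F * f F * g F)"

lemma sc_finite: "simplicial_complex K \<Longrightarrow> finite K"
  unfolding simplicial_complex_def by blast
lemma sc_face_finite: "simplicial_complex K \<Longrightarrow> F \<in> K \<Longrightarrow> finite F"
  unfolding simplicial_complex_def by blast
lemma sc_closed: "simplicial_complex K \<Longrightarrow> F \<in> K \<Longrightarrow> G \<subseteq> F \<Longrightarrow> G \<noteq> {} \<Longrightarrow> G \<in> K"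
  unfolding simplicial_complex_def by blast
lemma faces_iff: "F \<in> faces j K \<longleftrightarrow> F \<in> K \<and> card F = Suc j"
  unfolding faces_def by simp

lemma finite_faces: "simplicial_complex K \<Longrightarrow> finite (faces j K)"
  unfolding faces_def by (simp add: sc_finite)

lemma en_bij: assumes "simplicial_complex K"
  shows "bij_betw (en K n) {..<card (faces n K)} (faces n K)"
proof -
  have "\<exists>e. bij_betw e {..<card (faces n K)} (faces n K)"
    using ex_bij_betw_nat_finite[OF finite_faces[OF assms]] by (auto simp: lessThan_atLeast0)
  thus ?thesis unfolding en_def face_enum_def by (rule someI_ex)
qed

lemma en_in: "simplicial_complex K \<Longrightarrow> i < card (faces n K) \<Longrightarrow> en K n i \<in> faces n K"
  using en_bij[of K n] by (auto simp: bij_betw_def)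

lemma en_inj: "simplicial_complex K \<Longrightarrow> i < card (faces n K) \<Longrightarrow> j < card (faces n K) \<Longrightarrow>
   en K n i = en K n j \<longleftrightarrow> i = j"
  using en_bij[of K n] by (auto simp: bij_betw_def inj_on_def)

lemma en_surj: "simplicial_complex K \<Longrightarrow> F \<in> faces n K \<Longrightarrow> \<exists>i < card (faces n K). F = en K n i"
  using en_bij[of K n] by (auto simp: bij_betw_def)

lemma sum_en: "simplicial_complex K \<Longrightarrow> (\<Sum>F\<in>faces n K. g F) = (\<Sum>i<card (faces n K). g (en K n i))"
  using sum.reindex_bij_betw[OF en_bij[of K n], of g] by simp

lemma sub_face: assumes sc: "simplicial_complex K" and G: "G \<in> faces (Suc j) K" and v: "v \<in> G"
  shows "G - {v} \<in> faces j K"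
proof -
  have GK: "G \<in> K" and cG: "card G = Suc (Suc j)" using G by (auto simp: faces_iff)
  have fin: "finite G" by (rule sc_face_finite[OF sc GK])
  have c: "card (G - {v}) = Suc j" using cG fin v by simp
  hence "G - {v} \<noteq> {}" by (metis card.empty nat.distinct(1))
  hence "G - {v} \<in> K" by (rule sc_closed[OF sc GK, rotated]) blast
  thus ?thesis using c by (simp add: faces_iff)
qed

lemma face_diff: assumes sc: "simplicial_complex K" and G: "G \<in> faces (Suc j) K"
  and F: "F \<in> faces j K" and FG: "F \<subseteq> G"
  shows "\<exists>v\<in>G. G - F = {v} \<and> F = G - {v}"
proof -
  have GK: "G \<in> K" and cG: "card G = Suc (Suc j)" and cF: "card F = Suc j"
    using G F by (auto simp: faces_iff)
  have fin: "finite G" by (rule sc_face_finite[OF sc GK])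
  have "card (G - F) = 1" using card_Diff_subset[OF finite_subset[OF FG fin] FG] cG cF by simp
  then obtain v where v: "G - F = {v}" by (rule card_1_singletonE)
  have "v \<in> G" using v by blast
  moreover have "F = G - {v}" using v FG by blast
  ultimately show ?thesis using v by blast
qed

lemma inc_sign_diff: "v \<in> G \<Longrightarrow> inc_sign (G - {v}) G = (-1) ^ vidx v G"
proof -
  assume "v \<in> G"
  hence "G - (G - {v}) = {v}" by auto
  thus ?thesis unfolding inc_sign_def by simp
qed

lemma cobdry_faces: assumes sc: "simplicial_complex K" and G: "G \<in> faces (Suc n) K"
  shows "cobdry K n f G = (\<Sum>F\<in>{F\<in>faces n K. F \<subseteq> G}. inc_sign F G * f F)"
proof -
  have "cobdry K n f G = (\<Sum>v\<in>G. (-1) ^ vidx v G * f (G - {v}))"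
    using G unfolding cobdry_def by simp
  also have "\<dots> = (\<Sum>F\<in>{F\<in>faces n K. F \<subseteq> G}. inc_sign F G * f F)"
  proof (rule sum.reindex_bij_witness[of _ "\<lambda>F. the_elem (G - F)" "\<lambda>v. G - {v}"])
    fix v assume v: "v \<in> G"
    show "the_elem (G - (G - {v})) = v" using v by (subgoal_tac "G - (G - {v}) = {v}", auto)
    show "G - {v} \<in> {F \<in> faces n K. F \<subseteq> G}" using sub_face[OF sc G v] by auto
    show "inc_sign (G - {v}) G * f (G - {v}) = (-1) ^ vidx v G * f (G - {v})"
      using inc_sign_diff[OF v] by simp
  next
    fix F assume F: "F \<in> {F \<in> faces n K. F \<subseteq> G}"
    then obtain v where v: "v \<in> G" "G - F = {v}" "F = G - {v}" using face_diff[OF sc G] by blast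
    show "G - {the_elem (G - F)} = F" "the_elem (G - F) \<in> G" using v by auto
  qed
  finally show ?thesis .
qed

lemma cobdry_expand: assumes sc: "simplicial_complex K" and G: "G \<in> faces (Suc n) K"
  shows "cobdry K n f G = (\<Sum>i<card (faces n K). cc K n i G * f (en K n i))"
proof -
  have "cobdry K n f G = (\<Sum>F\<in>faces n K. if F \<subseteq> G then inc_sign F G * f F else 0)"
    unfolding cobdry_faces[OF sc G] by (rule sum.inter_filter[OF finite_faces[OF sc]])
  also have "\<dots> = (\<Sum>i<card (faces n K). cc K n i G * f (en K n i))"
    unfolding sum_en[OF sc] cc_def by (rule sum.cong, auto)
  finally show ?thesis .
qed

lemma cobdry_outside: "G \<notin> faces (Suc n) K \<Longrightarrow> cobdry K n f G = 0"
  unfolding cobdry_def by simp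

lemma M_entry: assumes sc: "simplicial_complex K" and i: "i < card (faces n K)" and k: "k < card (faces n K)"
  shows "up_laplacian_matrix K w n $$ (i,k) = (if w (en K n i) \<noteq> 0 then aa K w n i k / w (en K n i) else 0)"
proof -
  let ?N = "card (faces n K)" let ?e = "en K n"
  let ?ind = "\<lambda>F. if F = ?e k then 1 else (0::real)"
  have "up_laplacian_matrix K w n $$ (i,k) = up_laplacian K w n ?ind (?e i)"
    unfolding up_laplacian_matrix_def Let_def en_def[symmetric] using i k by simp
  also have "\<dots> = (if w (?e i) \<noteq> 0 then aa K w n i k / w (?e i) else 0)"
  proof (cases "w (?e i) = 0")
    case True thus ?thesis unfolding up_laplacian_def cobdry_adj_def by simp
  next
    case False
    have cb: "G \<in> faces (Suc n) K \<Longrightarrow> cobdry K n ?ind G = cc K n k G" for G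
    proof -
      assume G: "G \<in> faces (Suc n) K"
      have "cobdry K n ?ind G = (\<Sum>j<?N. cc K n j G * ?ind (?e j))" by (rule cobdry_expand[OF sc G])
      also have "\<dots> = (\<Sum>j<?N. if j = k then cc K n j G else 0)"
        by (rule sum.cong, insert en_inj[OF sc _ k], auto)
      also have "\<dots> = cc K n k G" using k by simp
      finally show ?thesis .
    qed
    have "up_laplacian K w n ?ind (?e i) =
      (\<Sum>G\<in>{G \<in> faces (Suc n) K. ?e i \<subseteq> G}. w G / w (?e i) * inc_sign (?e i) G * cobdry K n ?ind G)"
      unfolding up_laplacian_def cobdry_adj_def using False en_in[OF sc i] by simp
    also have "\<dots> = (\<Sum>G\<in>faces (Suc n) K. if ?e i \<subseteq> G then w G / w (?e i) * inc_sign (?e i) G * cobdry K n ?ind G else 0)"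
      by (rule sum.inter_filter[OF finite_faces[OF sc]])
    also have "\<dots> = (\<Sum>G\<in>faces (Suc n) K. w G * cc K n i G * cc K n k G / w (?e i))"
      by (rule sum.cong, auto simp: cb cc_def)
    also have "\<dots> = aa K w n i k / w (?e i)" unfolding aa_def by (simp add: sum_divide_distrib)
    finally show ?thesis using False by simp
  qed
  finally show ?thesis .
qed

lemma M_carrier: "up_laplacian_matrix K w n \<in> carrier_mat (card (faces n K)) (card (faces n K))"
  unfolding up_laplacian_matrix_def Let_def by simp

definition dmat :: "nat \<Rightarrow> (nat \<Rightarrow> real) \<Rightarrow> real mat" where
  "dmat N d = mat N N (\<lambda>(i,k). if i = k then d i else 0)"

lemma dmat_carrier[simp]: "dmat N d \<in> carrier_mat N N" unfolding dmat_def by simp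
lemma dmat_dim[simp]: "dim_row (dmat N d) = N" "dim_col (dmat N d) = N" unfolding dmat_def by simp_all

lemma dmat_left: assumes X: "X \<in> carrier_mat N M" and i: "i < N" and k: "k < M"
  shows "(dmat N d * X) $$ (i,k) = d i * X $$ (i,k)"
proof -
  have "(dmat N d * X) $$ (i,k) = (\<Sum>a<N. (if i = a then d i else 0) * X $$ (a,k))"
    using X i k unfolding dmat_def by (simp add: scalar_prod_def lessThan_atLeast0)
  also have "\<dots> = (\<Sum>a<N. if a = i then d i * X $$ (i,k) else 0)" by (rule sum.cong) auto
  also have "\<dots> = d i * X $$ (i,k)" using i by simp
  finally show ?thesis .
qed

lemma dmat_right: assumes X: "X \<in> carrier_mat M N" and i: "i < M" and k: "k < N"
  shows "(X * dmat N d) $$ (i,k) = X $$ (i,k) * d k"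
proof -
  have "(X * dmat N d) $$ (i,k) = (\<Sum>a<N. X $$ (i,a) * (if a = k then d a else 0))"
    using X i k unfolding dmat_def by (simp add: scalar_prod_def lessThan_atLeast0)
  also have "\<dots> = (\<Sum>a<N. if a = k then X $$ (i,k) * d k else 0)" by (rule sum.cong) auto
  also have "\<dots> = X $$ (i,k) * d k" using k by simp
  finally show ?thesis .
qed

lemma mult_entry: assumes "A \<in> carrier_mat nr n" "B \<in> carrier_mat n nc" "i < nr" "k < nc"
  shows "(A * B) $$ (i,k) = (\<Sum>a<n. A $$ (i,a) * B $$ (a,k))"
  using assms by (simp add: scalar_prod_def lessThan_atLeast0)

lemma tmult_entry: assumes "U \<in> carrier_mat N N" "S \<in> carrier_mat N N" "j < N" "k < N"
  shows "(transpose_mat U * S * U) $$ (j,k) = (\<Sum>b<N. (\<Sum>a<N. U $$ (a,j) * S $$ (a,b)) * U $$ (b,k))"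
proof -
  have "(transpose_mat U * S * U) $$ (j,k) = (\<Sum>b<N. (transpose_mat U * S) $$ (j,b) * U $$ (b,k))"
    using assms by (intro mult_entry[of _ N N]) auto
  also have "\<dots> = (\<Sum>b<N. (\<Sum>a<N. U $$ (a,j) * S $$ (a,b)) * U $$ (b,k))"
    using assms by (intro sum.cong refl, subst mult_entry[of _ N N], auto)
  finally show ?thesis .
qed

lemma dmat_inv: assumes "\<forall>i<N. d i \<noteq> 0"
  shows "dmat N d * dmat N (\<lambda>i. 1 / d i) = 1\<^sub>m N"
proof (rule eq_matI)
  fix i k assume i: "i < dim_row (1\<^sub>m N)" and k: "k < dim_col (1\<^sub>m N)"
  have "(dmat N d * dmat N (\<lambda>i. 1 / d i)) $$ (i,k) = dmat N d $$ (i,k) * (1 / d k)"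
    using i k by (intro dmat_right[of _ N]) auto
  thus "(dmat N d * dmat N (\<lambda>i. 1 / d i)) $$ (i,k) = 1\<^sub>m N $$ (i,k)"
    using i k assms by (simp add: dmat_def)
qed auto

lemma conj_entry: assumes S: "S \<in> carrier_mat N N" and i: "i < N" and k: "k < N"
  shows "(dmat N a * S * dmat N b) $$ (i,k) = a i * S $$ (i,k) * b k"
proof -
  have aS: "dmat N a * S \<in> carrier_mat N N" by (rule mult_carrier_mat[OF dmat_carrier S])
  have "(dmat N a * S * dmat N b) $$ (i,k) = (dmat N a * S) $$ (i,k) * b k"
    by (rule dmat_right[OF aS i k])
  also have "(dmat N a * S) $$ (i,k) = a i * S $$ (i,k)" by (rule dmat_left[OF S i k])
  finally show ?thesis .
qed

lemma aa_zero: assumes sc: "simplicial_complex K" and i: "i < card (faces n K)"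
  and zc: "\<forall>F\<in>faces n K. w F = 0 \<longrightarrow> (\<forall>G\<in>faces (Suc n) K. F \<subseteq> G \<longrightarrow> w G = 0)"
  and w0: "w (en K n i) = 0"
  shows "aa K w n i k = 0"
  unfolding aa_def
proof (rule sum.neutral, rule ballI)
  fix G assume G: "G \<in> faces (Suc n) K"
  show "w G * cc K n i G * cc K n k G = 0"
  proof (cases "en K n i \<subseteq> G")
    case True
    show ?thesis using zc[rule_format, OF en_in[OF sc i] w0 G True] by simp
  qed (simp add: cc_def)
qed

lemma sym_similar:
  fixes K :: "'v::linorder set set" and w u :: "'v set \<Rightarrow> real"
  assumes sc: "simplicial_complex K"
    and upos: "\<forall>F\<in>faces n K. u F > 0"
    and uw: "\<forall>F\<in>faces n K. w F \<noteq> 0 \<longrightarrow> u F = w F"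
    and zc: "\<forall>F\<in>faces n K. w F = 0 \<longrightarrow> (\<forall>G\<in>faces (Suc n) K. F \<subseteq> G \<longrightarrow> w G = 0)"
  shows "similar_mat (up_laplacian_matrix K w n)
     (mat (card (faces n K)) (card (faces n K)) (\<lambda>(i,k). aa K w n i k /
         (sqrt (u (en K n i)) * sqrt (u (en K n k)))))"
proof -
  define N where "N = card (faces n K)"
  define e where "e = en K n"
  define su where "su i = sqrt (u (e i))" for i
  have ein: "i < N \<Longrightarrow> e i \<in> faces n K" for i using en_in[OF sc] unfolding N_def e_def by auto
  have upos': "i < N \<Longrightarrow> u (e i) > 0" for i using upos ein by blast
  have supos: "i < N \<Longrightarrow> su i > 0" for i using upos' unfolding su_def by simp
  have susq: "i < N \<Longrightarrow> su i * su i = u (e i)" for i using upos'[of i] unfolding su_def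
    by (simp add: real_sqrt_mult_self)
  define S where "S = mat N N (\<lambda>(i,k). aa K w n i k / (su i * su k))"
  define T where "T = dmat N su"
  define Ti where "Ti = dmat N (\<lambda>i. 1 / su i)"
  define M where "M = up_laplacian_matrix K w n"
  have S: "S \<in> carrier_mat N N" unfolding S_def by simp
  have M: "M \<in> carrier_mat N N" unfolding M_def N_def by (rule M_carrier)
  have nz: "\<forall>i<N. su i \<noteq> 0" using supos by (auto simp: less_imp_neq[symmetric])
  have TTi: "T * Ti = 1\<^sub>m N" unfolding T_def Ti_def by (rule dmat_inv[OF nz])
  have nz2: "\<forall>i<N. 1 / su i \<noteq> 0" using nz by simp
  have TiT: "Ti * T = 1\<^sub>m N" using dmat_inv[OF nz2] unfolding T_def Ti_def by simp
  have MS: "M = Ti * S * T"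
  proof (rule eq_matI)
    fix i k assume i: "i < dim_row (Ti * S * T)" and k: "k < dim_col (Ti * S * T)"
    hence i: "i < N" and k: "k < N" unfolding Ti_def T_def by auto
    have "(Ti * S * T) $$ (i,k) = (1 / su i) * S $$ (i,k) * su k"
      unfolding T_def Ti_def by (rule conj_entry[OF S i k])
    also have "S $$ (i,k) = aa K w n i k / (su i * su k)" unfolding S_def using i k by simp
    also have "(1 / su i) * (aa K w n i k / (su i * su k)) * su k = aa K w n i k / (su i * su i)"
      using supos[OF i] supos[OF k] by simp
    also have "\<dots> = aa K w n i k / u (e i)" using susq[OF i] by simp
    also have "\<dots> = M $$ (i,k)"
    proof (cases "w (e i) = 0")
      case True
      have "aa K w n i k = 0" using aa_zero[OF sc _ zc] i True unfolding N_def e_def by blast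
      thus ?thesis using True M_entry[OF sc, of i n k w] i k unfolding M_def N_def e_def by simp
    next
      case False
      thus ?thesis using uw ein[OF i] M_entry[OF sc, of i n k w] i k unfolding M_def N_def e_def by simp
    qed
    finally show "M $$ (i,k) = (Ti * S * T) $$ (i,k)" ..
  next
    show "dim_row M = dim_row (Ti * S * T)" "dim_col M = dim_col (Ti * S * T)"
      using M unfolding Ti_def T_def by auto
  qed
  have "similar_mat_wit M S Ti T"
    by (rule similar_mat_witI[OF TiT TTi MS M S], auto simp: Ti_def T_def)
  hence "similar_mat M S" unfolding similar_mat_def by blast
  thus ?thesis unfolding M_def S_def su_def e_def N_def .
qed






lemma eigen_basis:
  fixes K :: "'v::linorder set set" and w u :: "'v set \<Rightarrow> real"
  assumes sc: "simplicial_complex K"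
    and upos: "\<forall>F\<in>faces n K. u F > 0"
    and uw: "\<forall>F\<in>faces n K. w F \<noteq> 0 \<longrightarrow> u F = w F"
    and zc: "\<forall>F\<in>faces n K. w F = 0 \<longrightarrow> (\<forall>G\<in>faces (Suc n) K. F \<subseteq> G \<longrightarrow> w G = 0)"
    and se: "sorted_eigenvalues (up_laplacian_matrix K w n) (card (faces n K)) lam"
  shows "\<exists>phi. (\<forall>j<card (faces n K). phi j \<in> cochains n K) \<and>
     (\<forall>j<card (faces n K). \<forall>k<card (faces n K). ip K n u (phi j) (phi k) = (if j = k then 1 else 0)) \<and>
     (\<forall>j<card (faces n K). \<forall>k<card (faces n K). bq K w n (phi j) (phi k) = (if j = k then lam (Suc j) else 0)) \<and>
     (\<forall>f\<in>cochains n K. f = (\<lambda>x. \<Sum>j<card (faces n K). ip K n u f (phi j) * phi j x))"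
proof -
  define N where "N = card (faces n K)"
  define e where "e = en K n"
  define su where "su i = sqrt (u (e i))" for i
  have ein: "i < N \<Longrightarrow> e i \<in> faces n K" for i using en_in[OF sc] unfolding N_def e_def by auto
  have einj: "i < N \<Longrightarrow> j < N \<Longrightarrow> e i = e j \<longleftrightarrow> i = j" for i j using en_inj[OF sc] unfolding N_def e_def by auto
  have upos': "i < N \<Longrightarrow> u (e i) > 0" for i using upos ein by blast
  have supos: "i < N \<Longrightarrow> su i > 0" for i using upos' unfolding su_def by simp
  have susq: "i < N \<Longrightarrow> su i * su i = u (e i)" for i using upos'[of i] unfolding su_def
    by (simp add: real_sqrt_mult_self)
  define S where "S = mat N N (\<lambda>(i,k). aa K w n i k / (su i * su k))"
  have S: "S \<in> carrier_mat N N" unfolding S_def by simp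
  have sim: "similar_mat (up_laplacian_matrix K w n) S"
    using sym_similar[OF sc upos uw zc] unfolding S_def su_def e_def N_def .
  define es where "es = map lam [1..<Suc N]"
  have es: "j < N \<Longrightarrow> es ! j = lam (Suc j)" for j unfolding es_def by (simp del: upt_Suc)
  have "char_poly S = char_poly (up_laplacian_matrix K w n)" using char_poly_similar[OF sim] by simp
  also have "\<dots> = (\<Prod>i\<in>{1..N}. [:- lam i, 1:])" using se unfolding sorted_eigenvalues_def N_def by simp
  also have "\<dots> = (\<Prod>x\<leftarrow>es. [:- x, 1:])" unfolding es_def map_map
    by (subst prod.distinct_set_conv_list[symmetric], simp, simp add: atLeastLessThanSuc_atLeastAtMost o_def del: upt_Suc)
  finally have cpS: "char_poly S = (\<Prod>x\<leftarrow>es. [:- x, 1:])" .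
  have symS: "transpose_mat S = S"
  proof (rule eq_matI)
    fix i j assume "i < dim_row S" "j < dim_col S"
    hence i: "i < N" and j: "j < N" using S by auto
    have "aa K w n j i = aa K w n i j" unfolding aa_def by (rule sum.cong, auto)
    thus "transpose_mat S $$ (i, j) = S $$ (i, j)" using i j unfolding S_def by (simp add: mult.commute)
  qed (insert S, auto)
  from real_sym_spectral[OF S symS cpS] obtain U where U: "U \<in> carrier_mat N N"
    and UtU: "transpose_mat U * U = 1\<^sub>m N" and UtSU: "transpose_mat U * S * U = diag_of N es" by auto
  have UUt: "U * transpose_mat U = 1\<^sub>m N" using mat_mult_left_right_inverse[OF _ U UtU] U by auto
  have Uent: "j < N \<Longrightarrow> k < N \<Longrightarrow> (\<Sum>a<N. U $$ (a,j) * U $$ (a,k)) = (if j = k then 1 else 0)" for j k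
  proof -
    assume j: "j < N" and k: "k < N"
    have "(transpose_mat U * U) $$ (j,k) = (\<Sum>a<N. transpose_mat U $$ (j,a) * U $$ (a,k))"
      using U j k by (intro mult_entry[of _ N N]) auto
    also have "\<dots> = (\<Sum>a<N. U $$ (a,j) * U $$ (a,k))" using U j by (intro sum.cong, auto)
    finally show ?thesis using UtU j k by simp
  qed
  have Uent2: "a < N \<Longrightarrow> c < N \<Longrightarrow> (\<Sum>j<N. U $$ (a,j) * U $$ (c,j)) = (if a = c then 1 else 0)" for a c
  proof -
    assume a: "a < N" and c: "c < N"
    have "(U * transpose_mat U) $$ (a,c) = (\<Sum>j<N. U $$ (a,j) * transpose_mat U $$ (j,c))"
      using U a c by (intro mult_entry[of _ N N]) auto
    also have "\<dots> = (\<Sum>j<N. U $$ (a,j) * U $$ (c,j))" using U c by (intro sum.cong, auto)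
    finally show ?thesis using UUt a c by simp
  qed
  define phi where "phi j x = (\<Sum>a<N. if e a = x then U $$ (a,j) / su a else 0)" for j x
  have phi_e: "a < N \<Longrightarrow> phi j (e a) = U $$ (a,j) / su a" for a j
  proof -
    assume a: "a < N"
    have "phi j (e a) = (\<Sum>b<N. if b = a then U $$ (b,j) / su b else 0)"
      unfolding phi_def by (rule sum.cong, insert einj a, auto)
    also have "\<dots> = U $$ (a,j) / su a" using a by simp
    finally show ?thesis .
  qed
  have phi_out: "x \<notin> faces n K \<Longrightarrow> phi j x = 0" for x j
    unfolding phi_def by (rule sum.neutral, insert ein, auto)
  have sumN: "(\<Sum>F\<in>faces n K. g F) = (\<Sum>a<N. g (e a))" for g :: "'v set \<Rightarrow> real"
    unfolding N_def e_def by (rule sum_en[OF sc])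
  have P1: "\<forall>j<N. phi j \<in> cochains n K" unfolding cochains_def using phi_out by auto
  have P2: "\<forall>j<N. \<forall>k<N. ip K n u (phi j) (phi k) = (if j = k then 1 else 0)"
  proof (intro allI impI)
    fix j k assume j: "j < N" and k: "k < N"
    have "ip K n u (phi j) (phi k) = (\<Sum>a<N. u (e a) * phi j (e a) * phi k (e a))"
      unfolding ip_def sumN ..
    also have "\<dots> = (\<Sum>a<N. U $$ (a,j) * U $$ (a,k))"
    proof (rule sum.cong[OF refl])
      fix a assume "a \<in> {..<N}" hence a: "a < N" by auto
      have "su a \<noteq> 0" using supos[OF a] by simp
      thus "u (e a) * phi j (e a) * phi k (e a) = U $$ (a,j) * U $$ (a,k)"
        unfolding phi_e[OF a] susq[OF a, symmetric] by (simp add: field_simps)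
    qed
    finally show "ip K n u (phi j) (phi k) = (if j = k then 1 else 0)" using Uent[OF j k] by simp
  qed
  have cobphi: "G \<in> faces (Suc n) K \<Longrightarrow> cobdry K n (phi j) G = (\<Sum>a<N. cc K n a G * (U $$ (a,j) / su a))" for G j
  proof -
    assume G: "G \<in> faces (Suc n) K"
    have "cobdry K n (phi j) G = (\<Sum>a<N. cc K n a G * phi j (e a))"
      using cobdry_expand[OF sc G] unfolding N_def e_def .
    also have "\<dots> = (\<Sum>a<N. cc K n a G * (U $$ (a,j) / su a))"
      by (rule sum.cong[OF refl], simp add: phi_e)
    finally show ?thesis .
  qed
  have P3: "\<forall>j<N. \<forall>k<N. bq K w n (phi j) (phi k) = (if j = k then lam (Suc j) else 0)"
  proof (intro allI impI)
    fix j k assume j: "j < N" and k: "k < N"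
    define t where "t a b G = w G * cc K n a G * cc K n b G * (U $$ (a,j) / su a) * (U $$ (b,k) / su b)" for a b G
    have "bq K w n (phi j) (phi k) = (\<Sum>G\<in>faces (Suc n) K. \<Sum>a<N. \<Sum>b<N. t a b G)"
      unfolding bq_def
    proof (rule sum.cong[OF refl])
      fix G assume G: "G \<in> faces (Suc n) K"
      show "w G * cobdry K n (phi j) G * cobdry K n (phi k) G = (\<Sum>a<N. \<Sum>b<N. t a b G)"
      proof -
        have "w G * cobdry K n (phi j) G * cobdry K n (phi k) G = w G * (cobdry K n (phi j) G * cobdry K n (phi k) G)"
          by simp
        also have "cobdry K n (phi j) G * cobdry K n (phi k) G =
          (\<Sum>a<N. \<Sum>b<N. (cc K n a G * (U $$ (a,j) / su a)) * (cc K n b G * (U $$ (b,k) / su b)))"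
          unfolding cobphi[OF G] by (rule sum_product)
        also have "w G * \<dots> = (\<Sum>a<N. \<Sum>b<N. w G * ((cc K n a G * (U $$ (a,j) / su a)) * (cc K n b G * (U $$ (b,k) / su b))))"
          by (simp add: sum_distrib_left)
        also have "\<dots> = (\<Sum>a<N. \<Sum>b<N. t a b G)"
          unfolding t_def by (rule sum.cong[OF refl], rule sum.cong[OF refl], simp add: ac_simps)
        finally show ?thesis .
      qed
    qed
    also have "\<dots> = (\<Sum>a<N. \<Sum>G\<in>faces (Suc n) K. \<Sum>b<N. t a b G)"
      by (rule sum.swap)
    also have "\<dots> = (\<Sum>a<N. \<Sum>b<N. \<Sum>G\<in>faces (Suc n) K. t a b G)"
      by (rule sum.cong[OF refl], rule sum.swap)
    also have "\<dots> = (\<Sum>b<N. \<Sum>a<N. \<Sum>G\<in>faces (Suc n) K. t a b G)"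
      by (rule sum.swap)
    also have "\<dots> = (\<Sum>b<N. (\<Sum>a<N. U $$ (a,j) * S $$ (a,b)) * U $$ (b,k))"
    proof (rule sum.cong[OF refl])
      fix b assume "b \<in> {..<N}" hence b: "b < N" by auto
      show "(\<Sum>a<N. \<Sum>G\<in>faces (Suc n) K. t a b G) = (\<Sum>a<N. U $$ (a,j) * S $$ (a,b)) * U $$ (b,k)"
        unfolding sum_distrib_right
      proof (rule sum.cong[OF refl])
        fix a assume "a \<in> {..<N}" hence a: "a < N" by auto
        have "U $$ (a,j) * S $$ (a,b) * U $$ (b,k) =
          U $$ (a,j) * ((\<Sum>G\<in>faces (Suc n) K. w G * cc K n a G * cc K n b G) / (su a * su b)) * U $$ (b,k)"
          unfolding S_def aa_def using a b by simp
        also have "\<dots> = (\<Sum>G\<in>faces (Suc n) K. t a b G)"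
          unfolding t_def sum_divide_distrib sum_distrib_left sum_distrib_right
          by (rule sum.cong[OF refl], simp add: field_simps)
        finally show "(\<Sum>G\<in>faces (Suc n) K. t a b G) = U $$ (a,j) * S $$ (a,b) * U $$ (b,k)" ..
      qed
    qed
    also have "\<dots> = (transpose_mat U * S * U) $$ (j,k)" using tmult_entry[OF U S j k] by simp
    also have "\<dots> = (if j = k then lam (Suc j) else 0)" unfolding UtSU using j k es by (simp add: diag_of_def)
    finally show "bq K w n (phi j) (phi k) = (if j = k then lam (Suc j) else 0)" .
  qed
  have P4: "\<forall>f\<in>cochains n K. f = (\<lambda>x. \<Sum>j<N. ip K n u f (phi j) * phi j x)"
  proof (intro ballI ext)
    fix f x assume f: "f \<in> cochains n K"
    show "f x = (\<Sum>j<N. ip K n u f (phi j) * phi j x)"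
    proof (cases "x \<in> faces n K")
      case False
      thus ?thesis using f phi_out unfolding cochains_def by simp
    next
      case True
      then obtain c where c: "c < N" and x: "x = e c" using en_surj[OF sc] unfolding N_def e_def by blast
      have ipf: "ip K n u f (phi j) = (\<Sum>a<N. su a * f (e a) * U $$ (a,j))" for j
        unfolding ip_def sumN
      proof (rule sum.cong[OF refl])
        fix a assume "a \<in> {..<N}" hence a: "a < N" by auto
        have "su a \<noteq> 0" using supos[OF a] by simp
        thus "u (e a) * f (e a) * phi j (e a) = su a * f (e a) * U $$ (a, j)"
          unfolding phi_e[OF a] susq[OF a, symmetric] by (simp add: field_simps)
      qed
      have "(\<Sum>j<N. ip K n u f (phi j) * phi j x) = (\<Sum>j<N. \<Sum>a<N. (su a * f (e a) / su c) * (U $$ (a,j) * U $$ (c,j)))"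
        unfolding x phi_e[OF c] ipf sum_distrib_right
        by (rule sum.cong[OF refl], rule sum.cong[OF refl], simp)
      also have "\<dots> = (\<Sum>a<N. \<Sum>j<N. (su a * f (e a) / su c) * (U $$ (a,j) * U $$ (c,j)))"
        by (rule sum.swap)
      also have "\<dots> = (\<Sum>a<N. (su a * f (e a) / su c) * (\<Sum>j<N. U $$ (a,j) * U $$ (c,j)))"
        by (simp add: sum_distrib_left)
      also have "\<dots> = (\<Sum>a<N. if a = c then f (e c) else 0)"
      proof (rule sum.cong[OF refl])
        fix a assume "a \<in> {..<N}" hence a: "a < N" by auto
        have "su c \<noteq> 0" using supos[OF c] by simp
        thus "su a * f (e a) / su c * (\<Sum>j<N. U $$ (a, j) * U $$ (c, j)) = (if a = c then f (e c) else 0)"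
          using Uent2[OF a c] by simp
      qed
      also have "\<dots> = f x" using c x by simp
      finally show ?thesis ..
    qed
  qed
  show ?thesis unfolding N_def[symmetric] using P1 P2 P3 P4 by blast
qed





interpretation fvs: vector_space "\<lambda>(c::real) (f::'a \<Rightarrow> real) x. c * f x"
  by unfold_locales (auto simp: fun_eq_iff algebra_simps)

lemma fsum_apply: "(\<Sum>i\<in>A. g i) x = (\<Sum>i\<in>A. (g i x :: real))"
  by (induct A rule: infinite_finite_induct) auto

definition ind :: "'a \<Rightarrow> 'a \<Rightarrow> real" where "ind a = (\<lambda>z. if z = a then 1 else 0)"

lemma support_in_span:
  assumes fin: "finite A" and supp: "\<forall>z. z \<notin> A \<longrightarrow> g z = 0"
  shows "g \<in> fvs.span (ind ` A)"
proof -
  have "g = (\<Sum>a\<in>A. (\<lambda>x. g a * ind a x))"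
  proof (rule ext)
    fix z
    have "(\<Sum>a\<in>A. (\<lambda>x. g a * ind a x)) z = (\<Sum>a\<in>A. g a * ind a z)" by (rule fsum_apply)
    also have "\<dots> = (\<Sum>a\<in>A. if a = z then g z else 0)" by (rule sum.cong, auto simp: ind_def)
    also have "\<dots> = g z" using fin supp by auto
    finally show "g z = (\<Sum>a\<in>A. (\<lambda>x. g a * ind a x)) z" ..
  qed
  also have "\<dots> \<in> fvs.span (ind ` A)"
    by (rule fvs.span_sum, rule fvs.span_scale, rule fvs.span_base, auto)
  finally show ?thesis .
qed

lemma ind_inj: "inj ind"
  unfolding inj_def ind_def by (metis one_neq_zero)

lemma ind_indep: "finite A \<Longrightarrow> fvs.independent (ind ` A)"
proof
  assume fin: "finite A" and dep: "fvs.dependent (ind ` A)"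
  from dep obtain u where u: "\<exists>v\<in>ind ` A. u v \<noteq> 0" and s: "(\<Sum>v\<in>ind ` A. (\<lambda>x. u v * v x)) = 0"
    using fvs.dependent_finite[of "ind ` A"] fin by auto
  from u obtain a where a: "a \<in> A" "u (ind a) \<noteq> 0" by auto
  have "0 = (\<Sum>v\<in>ind ` A. (\<lambda>x. u v * v x)) a" using s by simp
  also have "\<dots> = (\<Sum>v\<in>ind ` A. u v * v a)" by (rule fsum_apply)
  also have "\<dots> = (\<Sum>b\<in>A. u (ind b) * ind b a)"
    by (subst sum.reindex, rule inj_on_subset[OF ind_inj], auto)
  also have "\<dots> = (\<Sum>b\<in>A. if b = a then u (ind a) else 0)" by (rule sum.cong, auto simp: ind_def)
  also have "\<dots> = u (ind a)" using a fin by simp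
  finally show False using a by simp
qed

lemma cochains_span: assumes fin: "finite (faces j H)"
  shows "cochains j H = fvs.span (ind ` faces j H)"
proof
  show "cochains j H \<subseteq> fvs.span (ind ` faces j H)"
    using support_in_span[OF fin] unfolding cochains_def by blast
  have sub: "fvs.subspace (cochains j H)"
    unfolding fvs.subspace_def cochains_def by auto
  show "fvs.span (ind ` faces j H) \<subseteq> cochains j H"
    by (rule fvs.span_minimal[OF _ sub], auto simp: cochains_def ind_def)
qed

lemma rdim_cochains: assumes fin: "finite (faces j H)"
  shows "rdim (cochains j H) = card (faces j H)"
proof -
  have "rdim (cochains j H) = card (ind ` faces j H)"
    unfolding rdim_def
    using fvs.dim_eq_card_independent[OF ind_indep[OF fin]] cochains_span[OF fin] by simp
  also have "\<dots> = card (faces j H)" by (rule card_image, rule inj_on_subset[OF ind_inj], simp)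
  finally show ?thesis .
qed

lemma cobdry_lin:
  "cobdry K n (\<lambda>x. \<Sum>j\<in>J. c j * g j x) G = (\<Sum>j\<in>J. c j * cobdry K n (g j) G)"
proof (cases "G \<in> faces (Suc n) K")
  case True
  have "(\<Sum>v\<in>G. (-1) ^ vidx v G * (\<Sum>j\<in>J. c j * g j (G - {v}))) =
        (\<Sum>v\<in>G. \<Sum>j\<in>J. c j * ((-1) ^ vidx v G * g j (G - {v})))"
    by (simp add: sum_distrib_left ac_simps)
  also have "\<dots> = (\<Sum>j\<in>J. \<Sum>v\<in>G. c j * ((-1) ^ vidx v G * g j (G - {v})))" by (rule sum.swap)
  also have "\<dots> = (\<Sum>j\<in>J. c j * (\<Sum>v\<in>G. (-1) ^ vidx v G * g j (G - {v})))" by (simp add: sum_distrib_left)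
  finally show ?thesis using True unfolding cobdry_def by simp
qed (simp add: cobdry_def)

lemma cobdry_add: "cobdry K n (\<lambda>x. f x + g x) G = cobdry K n f G + cobdry K n g G"
  unfolding cobdry_def by (simp add: algebra_simps sum.distrib)

lemma cobdry_scale: "cobdry K n (\<lambda>x. a * f x) G = a * cobdry K n f G"
  unfolding cobdry_def by (simp add: algebra_simps sum_distrib_left)

lemma pigeon:
  fixes R :: "(nat \<Rightarrow> real) \<Rightarrow> ('b \<Rightarrow> real)" and S :: "('b \<Rightarrow> real) set"
  assumes add: "\<And>c d. R (\<lambda>i. c i + d i) = (\<lambda>x. R c x + R d x)"
    and scal: "\<And>a c. R (\<lambda>i. a * c i) = (\<lambda>x. a * R c x)"
    and sp: "\<And>c. R c \<in> fvs.span S"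
    and fin: "finite S" and card: "card S < m"
  shows "\<exists>c. (\<forall>i. m \<le> i \<longrightarrow> c i = 0) \<and> (\<exists>i<m. c i \<noteq> 0) \<and> R c = (\<lambda>_. 0)"
proof -
  have R0: "R (\<lambda>i. 0) = (\<lambda>_. 0)" using scal[of 0 "\<lambda>_. 0"] by simp
  have Rsum: "finite J \<Longrightarrow> R (\<lambda>i. \<Sum>j\<in>J. a j * e j i) = (\<lambda>x. \<Sum>j\<in>J. a j * R (e j) x)" for J a e
  proof (induct J rule: finite_induct)
    case empty thus ?case using R0 by simp
  next
    case (insert j J)
    have "R (\<lambda>i. \<Sum>j\<in>insert j J. a j * e j i) = R (\<lambda>i. a j * e j i + (\<Sum>j\<in>J. a j * e j i))"
      using insert by simp
    also have "\<dots> = (\<lambda>x. R (\<lambda>i. a j * e j i) x + R (\<lambda>i. \<Sum>j\<in>J. a j * e j i) x)" by (rule add)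
    also have "\<dots> = (\<lambda>x. \<Sum>j\<in>insert j J. a j * R (e j) x)" using insert scal by simp
    finally show ?case .
  qed
  define E where "E j = R (ind j)" for j
  show ?thesis
  proof (cases "inj_on E {..<m}")
    case False
    then obtain i j where ij: "i < m" "j < m" "i \<noteq> j" "E i = E j" unfolding inj_on_def by auto
    define c where "c = (\<lambda>x. ind i x + (-1) * ind j x)"
    have "R c = (\<lambda>x. R (ind i) x + (-1) * R (ind j) x)" unfolding c_def add scal by simp
    hence "R c = (\<lambda>_. 0)" using ij unfolding E_def by simp
    moreover have "\<forall>k. m \<le> k \<longrightarrow> c k = 0" using ij unfolding c_def ind_def by auto
    moreover have "c i \<noteq> 0" using ij unfolding c_def ind_def by auto
    ultimately show ?thesis using ij by blast
  next
    case True
    have "fvs.dependent (E ` {..<m})"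
    proof (rule ccontr)
      assume ind: "fvs.independent (E ` {..<m})"
      have "E ` {..<m} \<subseteq> fvs.span S" unfolding E_def using sp by auto
      from fvs.independent_span_bound[OF fin ind this] have "card (E ` {..<m}) \<le> card S" by simp
      thus False using card card_image[OF True] by simp
    qed
    then obtain u where u: "\<exists>v\<in>E ` {..<m}. u v \<noteq> 0" and s: "(\<Sum>v\<in>E ` {..<m}. (\<lambda>x. u v * v x)) = 0"
      using fvs.dependent_finite[of "E ` {..<m}"] by auto
    define a where "a j = u (E j)" for j
    define c where "c = (\<lambda>i. \<Sum>j<m. a j * ind j i)"
    have "R c = (\<lambda>x. \<Sum>j<m. a j * E j x)" unfolding c_def E_def by (rule Rsum, simp)
    also have "\<dots> = (\<lambda>x. (\<Sum>v\<in>E ` {..<m}. (\<lambda>x. u v * v x)) x)"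
      by (rule ext, subst fsum_apply, subst sum.reindex[OF True], simp add: a_def)
    also have "\<dots> = (\<lambda>_. 0)" using s by simp
    finally have Rc: "R c = (\<lambda>_. 0)" .
    have cval: "c i = (if i < m then a i else 0)" for i
    proof -
      have "c i = (\<Sum>j<m. if j = i then a i else 0)" unfolding c_def by (rule sum.cong, auto simp: ind_def)
      thus ?thesis by simp
    qed
    from u obtain i where i: "i < m" "a i \<noteq> 0" unfolding a_def by auto
    show ?thesis using Rc cval i by (intro exI[of _ c]) auto
  qed
qed





definition ebasis where
  "ebasis K n w u lam phi \<longleftrightarrow>
     (\<forall>j<card (faces n K). phi j \<in> cochains n K) \<and>
     (\<forall>j<card (faces n K). \<forall>k<card (faces n K). ip K n u (phi j) (phi k) = (if j = k then 1 else 0)) \<and>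
     (\<forall>j<card (faces n K). \<forall>k<card (faces n K). bq K w n (phi j) (phi k) = (if j = k then lam (Suc j) else 0)) \<and>
     (\<forall>f\<in>cochains n K. f = (\<lambda>x. \<Sum>j<card (faces n K). ip K n u f (phi j) * phi j x))"

lemma ip_lin: "ip K n u (\<lambda>x. \<Sum>j\<in>J. c j * g j x) h = (\<Sum>j\<in>J. c j * ip K n u (g j) h)"
proof -
  have "ip K n u (\<lambda>x. \<Sum>j\<in>J. c j * g j x) h = (\<Sum>F\<in>faces n K. \<Sum>j\<in>J. c j * (u F * g j F * h F))"
    unfolding ip_def by (rule sum.cong[OF refl], simp add: sum_distrib_left sum_distrib_right ac_simps)
  also have "\<dots> = (\<Sum>j\<in>J. \<Sum>F\<in>faces n K. c j * (u F * g j F * h F))" by (rule sum.swap)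
  also have "\<dots> = (\<Sum>j\<in>J. c j * ip K n u (g j) h)" unfolding ip_def by (simp add: sum_distrib_left)
  finally show ?thesis .
qed

lemma ip_sym: "ip K n u f g = ip K n u g f"
  unfolding ip_def by (simp add: ac_simps)

lemma ip_add: "ip K n u (\<lambda>x. f x + g x) h = ip K n u f h + ip K n u g h"
  unfolding ip_def by (simp add: algebra_simps sum.distrib)

lemma ip_scale: "ip K n u (\<lambda>x. a * f x) h = a * ip K n u f h"
  unfolding ip_def by (simp add: algebra_simps sum_distrib_left)

lemma bq_lin: "bq K w n (\<lambda>x. \<Sum>j\<in>J. c j * g j x) h = (\<Sum>j\<in>J. c j * bq K w n (g j) h)"
proof -
  have "bq K w n (\<lambda>x. \<Sum>j\<in>J. c j * g j x) h = (\<Sum>G\<in>faces (Suc n) K. \<Sum>j\<in>J. c j * (w G * cobdry K n (g j) G * cobdry K n h G))"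
    unfolding bq_def cobdry_lin by (rule sum.cong[OF refl], simp add: sum_distrib_left sum_distrib_right ac_simps)
  also have "\<dots> = (\<Sum>j\<in>J. \<Sum>G\<in>faces (Suc n) K. c j * (w G * cobdry K n (g j) G * cobdry K n h G))" by (rule sum.swap)
  also have "\<dots> = (\<Sum>j\<in>J. c j * bq K w n (g j) h)" unfolding bq_def by (simp add: sum_distrib_left)
  finally show ?thesis .
qed

lemma bq_sym: "bq K w n f g = bq K w n g f"
  unfolding bq_def by (simp add: ac_simps)

context
  fixes K :: "'v::linorder set set" and n :: nat and w u :: "'v set \<Rightarrow> real" and lam :: "nat \<Rightarrow> real"
    and phi :: "nat \<Rightarrow> 'v set \<Rightarrow> real"
  assumes eb: "ebasis K n w u lam phi"
begin

lemma eb_ip_phi: assumes J: "J \<subseteq> {..<card (faces n K)}" and k: "k < card (faces n K)"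
  shows "ip K n u (\<lambda>x. \<Sum>j\<in>J. c j * phi j x) (phi k) = (if k \<in> J then c k else 0)"
proof -
  have fin: "finite J" using J finite_subset by blast
  have "ip K n u (\<lambda>x. \<Sum>j\<in>J. c j * phi j x) (phi k) = (\<Sum>j\<in>J. c j * ip K n u (phi j) (phi k))" by (rule ip_lin)
  also have "\<dots> = (\<Sum>j\<in>J. if j = k then c k else 0)"
    by (rule sum.cong[OF refl], insert eb J k, auto simp: ebasis_def)
  also have "\<dots> = (if k \<in> J then c k else 0)" using fin by simp
  finally show ?thesis .
qed

lemma eb_ip_self: assumes J: "J \<subseteq> {..<card (faces n K)}"
  shows "ip K n u (\<lambda>x. \<Sum>j\<in>J. c j * phi j x) (\<lambda>x. \<Sum>j\<in>J. c j * phi j x) = (\<Sum>j\<in>J. (c j)^2)"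
proof -
  have "ip K n u (\<lambda>x. \<Sum>j\<in>J. c j * phi j x) (\<lambda>x. \<Sum>j\<in>J. c j * phi j x)
     = (\<Sum>j\<in>J. c j * ip K n u (\<lambda>x. \<Sum>j\<in>J. c j * phi j x) (phi j))"
    by (subst ip_lin, rule sum.cong[OF refl], simp add: ip_sym)
  also have "\<dots> = (\<Sum>j\<in>J. (c j)^2)"
    by (rule sum.cong[OF refl], insert J, subst eb_ip_phi[OF J], auto simp: power2_eq_square)
  finally show ?thesis .
qed

lemma eb_bq_self: assumes J: "J \<subseteq> {..<card (faces n K)}"
  shows "bq K w n (\<lambda>x. \<Sum>j\<in>J. c j * phi j x) (\<lambda>x. \<Sum>j\<in>J. c j * phi j x) = (\<Sum>j\<in>J. lam (Suc j) * (c j)^2)"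
proof -
  have fin: "finite J" using J finite_subset by blast
  have inner: "j \<in> J \<Longrightarrow> bq K w n (\<lambda>x. \<Sum>j\<in>J. c j * phi j x) (phi j) = c j * lam (Suc j)" for j
  proof -
    assume jJ: "j \<in> J"
    have "bq K w n (\<lambda>x. \<Sum>j\<in>J. c j * phi j x) (phi j) = (\<Sum>i\<in>J. c i * bq K w n (phi i) (phi j))" by (rule bq_lin)
    also have "\<dots> = (\<Sum>i\<in>J. if i = j then c j * lam (Suc j) else 0)"
    proof (rule sum.cong[OF refl])
      fix i assume iJ: "i \<in> J"
      have i: "i < card (faces n K)" and j: "j < card (faces n K)" using iJ jJ J by auto
      have "bq K w n (phi i) (phi j) = (if i = j then lam (Suc i) else 0)"
        using eb i j unfolding ebasis_def by blast
      thus "c i * bq K w n (phi i) (phi j) = (if i = j then c j * lam (Suc j) else 0)" by simp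
    qed
    also have "\<dots> = c j * lam (Suc j)" using fin jJ by simp
    finally show ?thesis .
  qed
  have "bq K w n (\<lambda>x. \<Sum>j\<in>J. c j * phi j x) (\<lambda>x. \<Sum>j\<in>J. c j * phi j x)
     = (\<Sum>j\<in>J. c j * bq K w n (\<lambda>x. \<Sum>j\<in>J. c j * phi j x) (phi j))"
    by (subst bq_lin, rule sum.cong[OF refl], simp add: bq_sym)
  also have "\<dots> = (\<Sum>j\<in>J. lam (Suc j) * (c j)^2)"
    by (rule sum.cong[OF refl], simp add: inner power2_eq_square)
  finally show ?thesis .
qed

lemma eb_complete: "f \<in> cochains n K \<Longrightarrow> f = (\<lambda>x. \<Sum>j<card (faces n K). ip K n u f (phi j) * phi j x)"
  using eb unfolding ebasis_def by blast

lemma eb_cochain: "phi j \<in> cochains n K" if "j < card (faces n K)"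
  using eb that unfolding ebasis_def by blast

lemma eb_comb_cochain: assumes J: "J \<subseteq> {..<card (faces n K)}"
  shows "(\<lambda>x. \<Sum>j\<in>J. c j * phi j x) \<in> cochains n K"
  using eb_cochain J unfolding cochains_def by (auto intro!: sum.neutral)

end





lemma cobdry_zero_on_H:
  assumes scH: "simplicial_complex H" and G: "G \<in> faces (Suc n) K" and GH: "G \<in> H"
    and fH: "\<forall>F\<in>faces n H. f F = 0"
  shows "cobdry K n f G = 0"
proof -
  have GH': "G \<in> faces (Suc n) H" using G GH by (simp add: faces_iff)
  have "cobdry K n f G = (\<Sum>v\<in>G. (-1) ^ vidx v G * f (G - {v}))" using G unfolding cobdry_def by simp
  also have "\<dots> = 0" by (rule sum.neutral, insert sub_face[OF scH GH'] fH, auto)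
  finally show ?thesis .
qed

lemma cobdry_restrict:
  assumes scH: "simplicial_complex H" and G: "G \<in> faces (Suc n) K" and GH: "G \<in> H"
  shows "cobdry K n f G = cobdry H n (\<lambda>F. if F \<in> faces n H then f F else 0) G"
proof -
  have GH': "G \<in> faces (Suc n) H" using G GH by (simp add: faces_iff)
  show ?thesis unfolding cobdry_def using G GH' sub_face[OF scH GH'] by (auto intro!: sum.cong)
qed

lemma sum_sq_pos: "finite I \<Longrightarrow> i \<in> I \<Longrightarrow> c i \<noteq> 0 \<Longrightarrow> (\<Sum>j\<in>I. (c j)^2) > (0::real)"
  by (rule sum_pos2[of I i], auto)

lemma ub_core:
  fixes K H :: "'v::linorder set set" and wK wL uL :: "'v set \<Rightarrow> real"
  assumes sc: "simplicial_complex K" and scH: "simplicial_complex H"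
    and eK: "ebasis K n wK wK lam phiK" and eL: "ebasis K n wL uL theta phiL"
    and wsame: "\<forall>G\<in>faces (Suc n) K. G \<notin> H \<longrightarrow> wL G = wK G"
    and usame: "\<forall>F\<in>faces n K. F \<notin> H \<longrightarrow> uL F = wK F"
    and mN: "m \<le> card (faces n K)" and mm: "m' + card (faces n H) < m"
    and lamle: "\<forall>j<m. lam (Suc j) \<le> x0"
    and thgt: "\<forall>j. m' \<le> j \<longrightarrow> j < card (faces n K) \<longrightarrow> x0 < theta (Suc j)"
  shows False
proof -
  define N where "N = card (faces n K)"
  define gK where "gK c = (\<lambda>x. \<Sum>j<m. c j * phiK j x)" for c :: "nat \<Rightarrow> real"
  define R :: "(nat \<Rightarrow> real) \<Rightarrow> ('v set + nat) \<Rightarrow> real"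
    where "R c = (\<lambda>z. case z of Inl F \<Rightarrow> (if F \<in> faces n H then gK c F else 0)
        | Inr j \<Rightarrow> (if j < m' then ip K n uL (gK c) (phiL j) else 0))" for c
  define A :: "('v set + nat) set" where "A = Inl ` faces n H \<union> Inr ` {..<m'}"
  have finA: "finite A" unfolding A_def using finite_faces[OF scH] by simp
  have gK_add: "gK (\<lambda>i. c i + d i) = (\<lambda>x. gK c x + gK d x)" for c d
    unfolding gK_def by (simp add: algebra_simps sum.distrib)
  have gK_scal: "gK (\<lambda>i. a * c i) = (\<lambda>x. a * gK c x)" for a c
    unfolding gK_def by (simp add: algebra_simps sum_distrib_left)
  have add: "R (\<lambda>i. c i + d i) = (\<lambda>x. R c x + R d x)" for c d
    unfolding R_def by (rule ext, simp split: sum.split add: gK_add ip_add)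
  have scal: "R (\<lambda>i. a * c i) = (\<lambda>x. a * R c x)" for a c
    unfolding R_def by (rule ext, simp split: sum.split add: gK_scal ip_scale)
  have sp: "R c \<in> fvs.span (ind ` A)" for c
    by (rule support_in_span[OF finA], auto simp: R_def A_def split: sum.split)
  have "card (ind ` A) \<le> card A" by (rule card_image_le[OF finA])
  also have "\<dots> \<le> card (Inl ` faces n H :: ('v set + nat) set) + card (Inr ` {..<m'} :: ('v set + nat) set)"
    unfolding A_def by (rule card_Un_le)
  also have "\<dots> = card (faces n H) + m'" by (simp add: card_image)
  finally have cardS: "card (ind ` A) < m" using mm by simp
  obtain c where c0: "\<forall>i. m \<le> i \<longrightarrow> c i = 0" and cne: "\<exists>i<m. c i \<noteq> 0" and Rc: "R c = (\<lambda>_. 0)"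
    using pigeon[of R "ind ` A" m, OF add scal sp _ cardS] finA by blast
  define f where "f = gK c"
  have Jm: "{..<m} \<subseteq> {..<card (faces n K)}" using mN by auto
  from cne obtain i0 where i0: "i0 < m" "c i0 \<noteq> 0" by blast
  have NK: "ip K n wK f f = (\<Sum>j<m. (c j)^2)" unfolding f_def gK_def by (rule eb_ip_self[OF eK Jm])
  have NKpos: "ip K n wK f f > 0" unfolding NK by (rule sum_sq_pos[of _ i0], insert i0, auto)
  have QK: "bq K wK n f f = (\<Sum>j<m. lam (Suc j) * (c j)^2)" unfolding f_def gK_def by (rule eb_bq_self[OF eK Jm])
  have QKle: "bq K wK n f f \<le> x0 * ip K n wK f f"
    unfolding QK NK sum_distrib_left
    by (rule sum_mono, insert lamle, auto intro: mult_right_mono)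
  have fcoch: "f \<in> cochains n K" unfolding f_def gK_def by (rule eb_comb_cochain[OF eK Jm])
  have fH: "\<forall>F\<in>faces n H. f F = 0"
  proof
    fix F assume F: "F \<in> faces n H"
    have "R c (Inl F) = 0" using Rc by simp
    thus "f F = 0" using F unfolding R_def f_def by simp
  qed
  define d where "d j = ip K n uL f (phiL j)" for j
  have dz: "j < m' \<Longrightarrow> d j = 0" for j
  proof -
    assume j: "j < m'"
    have "R c (Inr j) = 0" using Rc by simp
    thus "d j = 0" using j unfolding R_def f_def d_def by simp
  qed
  have JL: "{m'..<N} \<subseteq> {..<card (faces n K)}" unfolding N_def by auto
  have fL: "f = (\<lambda>x. \<Sum>j\<in>{m'..<N}. d j * phiL j x)"
  proof -
    have "f = (\<lambda>x. \<Sum>j<N. d j * phiL j x)" unfolding d_def N_def by (rule eb_complete[OF eL fcoch])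
    also have "\<dots> = (\<lambda>x. \<Sum>j\<in>{m'..<N}. d j * phiL j x)"
      by (rule ext, rule sum.mono_neutral_right, auto simp: dz)
    finally show ?thesis .
  qed
  have NL: "ip K n uL f f = (\<Sum>j\<in>{m'..<N}. (d j)^2)"
  proof -
    have "ip K n uL f f = ip K n uL (\<lambda>x. \<Sum>j\<in>{m'..<N}. d j * phiL j x) (\<lambda>x. \<Sum>j\<in>{m'..<N}. d j * phiL j x)"
      by (simp only: fL[symmetric])
    also have "\<dots> = (\<Sum>j\<in>{m'..<N}. (d j)^2)" by (rule eb_ip_self[OF eL JL])
    finally show ?thesis .
  qed
  have QL: "bq K wL n f f = (\<Sum>j\<in>{m'..<N}. theta (Suc j) * (d j)^2)"
  proof -
    have "bq K wL n f f = bq K wL n (\<lambda>x. \<Sum>j\<in>{m'..<N}. d j * phiL j x) (\<lambda>x. \<Sum>j\<in>{m'..<N}. d j * phiL j x)"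
      by (simp only: fL[symmetric])
    also have "\<dots> = (\<Sum>j\<in>{m'..<N}. theta (Suc j) * (d j)^2)" by (rule eb_bq_self[OF eL JL])
    finally show ?thesis .
  qed
  have dne: "\<exists>j\<in>{m'..<N}. d j \<noteq> 0"
  proof (rule ccontr)
    assume "\<not> ?thesis"
    hence "f = (\<lambda>x. 0)" using fL by simp
    hence "ip K n wK f f = 0" unfolding ip_def by simp
    thus False using NKpos by simp
  qed
  then obtain j0 where j0: "j0 \<in> {m'..<N}" "d j0 \<noteq> 0" by blast
  have QLgt: "bq K wL n f f > x0 * ip K n uL f f"
  proof -
    have "bq K wL n f f - x0 * ip K n uL f f = (\<Sum>j\<in>{m'..<N}. (theta (Suc j) - x0) * (d j)^2)"
      unfolding QL NL by (simp add: sum_distrib_left sum_subtractf algebra_simps)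
    also have "\<dots> > 0"
    proof (rule sum_pos2[of _ j0])
      show "0 < (theta (Suc j0) - x0) * (d j0)^2" using j0 thgt unfolding N_def by auto
      fix j assume "j \<in> {m'..<N}"
      thus "0 \<le> (theta (Suc j) - x0) * (d j)^2" using thgt unfolding N_def
        by (auto intro!: mult_nonneg_nonneg simp: less_imp_le)
    qed (insert j0, auto)
    finally show ?thesis by simp
  qed
  have Qeq: "bq K wL n f f = bq K wK n f f"
    unfolding bq_def
  proof (rule sum.cong[OF refl])
    fix G assume G: "G \<in> faces (Suc n) K"
    show "wL G * cobdry K n f G * cobdry K n f G = wK G * cobdry K n f G * cobdry K n f G"
    proof (cases "G \<in> H")
      case True thus ?thesis using cobdry_zero_on_H[OF scH G True fH] by simp
    next
      case False thus ?thesis using wsame G by simp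
    qed
  qed
  have Neq: "ip K n uL f f = ip K n wK f f"
    unfolding ip_def
  proof (rule sum.cong[OF refl])
    fix F assume F: "F \<in> faces n K"
    show "uL F * f F * f F = wK F * f F * f F"
    proof (cases "F \<in> H")
      case True hence "F \<in> faces n H" using F by (simp add: faces_iff)
      thus ?thesis using fH by simp
    next
      case False thus ?thesis using usame F by simp
    qed
  qed
  show False using QLgt Qeq QKle Neq by simp
qed

lemma lb_core:
  fixes K H :: "'v::linorder set set" and wK wL uL :: "'v set \<Rightarrow> real"
  assumes sc: "simplicial_complex K" and scH: "simplicial_complex H"
    and eK: "ebasis K n wK wK lam phiK" and eL: "ebasis K n wL uL theta phiL"
    and wsame: "\<forall>G\<in>faces (Suc n) K. G \<notin> H \<longrightarrow> wL G = wK G"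
    and uleK: "\<forall>F\<in>faces n K. uL F \<le> wK F"
    and Bs: "finite Bs" "coboundaries (Suc n) H \<subseteq> fvs.span Bs"
    and mN: "m' \<le> card (faces n K)" and mm: "m + card Bs < m'"
    and x0: "0 \<le> x0"
    and thle: "\<forall>j<m'. theta (Suc j) \<le> x0"
    and lamgt: "\<forall>j. m \<le> j \<longrightarrow> j < card (faces n K) \<longrightarrow> x0 < lam (Suc j)"
  shows False
proof -
  define N where "N = card (faces n K)"
  define gL where "gL c = (\<lambda>x. \<Sum>j<m'. c j * phiL j x)" for c :: "nat \<Rightarrow> real"
  define rH where "rH f = (\<lambda>F. if F \<in> faces n H then f F else (0::real))" for f :: "'v set \<Rightarrow> real"
  define R :: "(nat \<Rightarrow> real) \<Rightarrow> ('v set + nat) \<Rightarrow> real"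
    where "R c = (\<lambda>z. case z of Inl G \<Rightarrow> cobdry H n (rH (gL c)) G
        | Inr j \<Rightarrow> (if j < m then ip K n wK (gL c) (phiK j) else 0))" for c
  define emb :: "('v set \<Rightarrow> real) \<Rightarrow> ('v set + nat) \<Rightarrow> real"
    where "emb b = (\<lambda>z. case z of Inl G \<Rightarrow> b G | Inr _ \<Rightarrow> 0)" for b
  define S where "S = emb ` Bs \<union> ind ` (Inr ` {..<m} :: ('v set + nat) set)"
  have gL_add: "gL (\<lambda>i. c i + d i) = (\<lambda>x. gL c x + gL d x)" for c d
    unfolding gL_def by (simp add: algebra_simps sum.distrib)
  have gL_scal: "gL (\<lambda>i. a * c i) = (\<lambda>x. a * gL c x)" for a c
    unfolding gL_def by (simp add: algebra_simps sum_distrib_left)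
  have rH_add: "rH (\<lambda>x. f x + g x) = (\<lambda>x. rH f x + rH g x)" for f g unfolding rH_def by auto
  have rH_scal: "rH (\<lambda>x. a * f x) = (\<lambda>x. a * rH f x)" for a f unfolding rH_def by auto
  have add: "R (\<lambda>i. c i + d i) = (\<lambda>x. R c x + R d x)" for c d
    unfolding R_def by (rule ext, simp split: sum.split add: gL_add ip_add rH_add cobdry_add)
  have scal: "R (\<lambda>i. a * c i) = (\<lambda>x. a * R c x)" for a c
    unfolding R_def by (rule ext, simp split: sum.split add: gL_scal ip_scale rH_scal cobdry_scale)
  have sp: "R c \<in> fvs.span S" for c
  proof -
    define \<beta> where "\<beta> = cobdry H n (rH (gL c))"
    define \<rho> :: "('v set + nat) \<Rightarrow> real"
      where "\<rho> = (\<lambda>z. case z of Inl _ \<Rightarrow> 0 | Inr j \<Rightarrow> (if j < m then ip K n wK (gL c) (phiK j) else 0))"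
    have "rH (gL c) \<in> cochains n H" unfolding rH_def cochains_def by simp
    hence "\<beta> \<in> coboundaries (Suc n) H" unfolding \<beta>_def coboundaries_def by simp
    hence "\<beta> \<in> fvs.span Bs" using Bs by blast
    then obtain u where u: "\<beta> = (\<Sum>b\<in>Bs. (\<lambda>x. u b * b x))" using fvs.span_finite[OF Bs(1)] by auto
    have "emb \<beta> = (\<Sum>b\<in>Bs. (\<lambda>x. u b * emb b x))"
    proof (rule ext)
      fix z show "emb \<beta> z = (\<Sum>b\<in>Bs. (\<lambda>x. u b * emb b x)) z"
        unfolding fsum_apply emb_def u by (cases z, auto simp: fsum_apply)
    qed
    also have "\<dots> \<in> fvs.span (emb ` Bs)"
      by (rule fvs.span_sum, rule fvs.span_scale, rule fvs.span_base, auto)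
    finally have e1: "emb \<beta> \<in> fvs.span S" using fvs.span_mono[of "emb ` Bs" S] unfolding S_def by auto
    have "\<rho> \<in> fvs.span (ind ` (Inr ` {..<m} :: ('v set + nat) set))"
      by (rule support_in_span, auto simp: \<rho>_def split: sum.split)
    hence e2: "\<rho> \<in> fvs.span S" using fvs.span_mono[of "ind ` (Inr ` {..<m} :: ('v set + nat) set)" S]
      unfolding S_def by auto
    have "R c = emb \<beta> + \<rho>"
      by (rule ext, auto simp: R_def emb_def \<rho>_def \<beta>_def split: sum.split)
    thus ?thesis using fvs.span_add[OF e1 e2] by simp
  qed
  have finS: "finite S" unfolding S_def using Bs by simp
  have "card S \<le> card (emb ` Bs) + card (ind ` (Inr ` {..<m} :: ('v set + nat) set))"
    unfolding S_def by (rule card_Un_le)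
  also have "\<dots> \<le> card Bs + m"
  proof (rule add_mono)
    show "card (emb ` Bs) \<le> card Bs" by (rule card_image_le[OF Bs(1)])
    have "card (ind ` (Inr ` {..<m} :: ('v set + nat) set)) \<le> card (Inr ` {..<m} :: ('v set + nat) set)"
      by (rule card_image_le, simp)
    also have "\<dots> \<le> m" by (rule card_image_le[THEN le_trans], auto)
    finally show "card (ind ` (Inr ` {..<m} :: ('v set + nat) set)) \<le> m" .
  qed
  finally have cardS: "card S < m'" using mm by simp
  obtain c where c0: "\<forall>i. m' \<le> i \<longrightarrow> c i = 0" and cne: "\<exists>i<m'. c i \<noteq> 0" and Rc: "R c = (\<lambda>_. 0)"
    using pigeon[of R S m', OF add scal sp finS cardS] by blast
  define f where "f = gL c"
  have Jm: "{..<m'} \<subseteq> {..<card (faces n K)}" using mN by auto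
  from cne obtain i0 where i0: "i0 < m'" "c i0 \<noteq> 0" by blast
  have NL: "ip K n uL f f = (\<Sum>j<m'. (c j)^2)" unfolding f_def gL_def by (rule eb_ip_self[OF eL Jm])
  have NLpos: "ip K n uL f f > 0" unfolding NL by (rule sum_sq_pos[of _ i0], insert i0, auto)
  have QL: "bq K wL n f f = (\<Sum>j<m'. theta (Suc j) * (c j)^2)" unfolding f_def gL_def by (rule eb_bq_self[OF eL Jm])
  have QLle: "bq K wL n f f \<le> x0 * ip K n uL f f"
    unfolding QL NL sum_distrib_left
    by (rule sum_mono, insert thle, auto intro: mult_right_mono)
  have fcoch: "f \<in> cochains n K" unfolding f_def gL_def by (rule eb_comb_cochain[OF eL Jm])
  have cobH: "cobdry H n (rH f) G = 0" for G
  proof -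
    have "R c (Inl G) = 0" using Rc by simp
    thus ?thesis unfolding R_def f_def by simp
  qed
  define d where "d j = ip K n wK f (phiK j)" for j
  have dz: "j < m \<Longrightarrow> d j = 0" for j
  proof -
    assume j: "j < m"
    have "R c (Inr j) = 0" using Rc by simp
    thus "d j = 0" using j unfolding R_def f_def d_def by simp
  qed
  have JK: "{m..<N} \<subseteq> {..<card (faces n K)}" unfolding N_def by auto
  have fK: "f = (\<lambda>x. \<Sum>j\<in>{m..<N}. d j * phiK j x)"
  proof -
    have "f = (\<lambda>x. \<Sum>j<N. d j * phiK j x)" unfolding d_def N_def by (rule eb_complete[OF eK fcoch])
    also have "\<dots> = (\<lambda>x. \<Sum>j\<in>{m..<N}. d j * phiK j x)"
      by (rule ext, rule sum.mono_neutral_right, auto simp: dz)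
    finally show ?thesis .
  qed
  have NK: "ip K n wK f f = (\<Sum>j\<in>{m..<N}. (d j)^2)"
  proof -
    have "ip K n wK f f = ip K n wK (\<lambda>x. \<Sum>j\<in>{m..<N}. d j * phiK j x) (\<lambda>x. \<Sum>j\<in>{m..<N}. d j * phiK j x)"
      by (simp only: fK[symmetric])
    also have "\<dots> = (\<Sum>j\<in>{m..<N}. (d j)^2)" by (rule eb_ip_self[OF eK JK])
    finally show ?thesis .
  qed
  have QK: "bq K wK n f f = (\<Sum>j\<in>{m..<N}. lam (Suc j) * (d j)^2)"
  proof -
    have "bq K wK n f f = bq K wK n (\<lambda>x. \<Sum>j\<in>{m..<N}. d j * phiK j x) (\<lambda>x. \<Sum>j\<in>{m..<N}. d j * phiK j x)"
      by (simp only: fK[symmetric])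
    also have "\<dots> = (\<Sum>j\<in>{m..<N}. lam (Suc j) * (d j)^2)" by (rule eb_bq_self[OF eK JK])
    finally show ?thesis .
  qed
  have dne: "\<exists>j\<in>{m..<N}. d j \<noteq> 0"
  proof (rule ccontr)
    assume "\<not> ?thesis"
    hence "f = (\<lambda>x. 0)" using fK by simp
    hence "ip K n uL f f = 0" unfolding ip_def by simp
    thus False using NLpos by simp
  qed
  then obtain j0 where j0: "j0 \<in> {m..<N}" "d j0 \<noteq> 0" by blast
  have QKgt: "bq K wK n f f > x0 * ip K n wK f f"
  proof -
    have "bq K wK n f f - x0 * ip K n wK f f = (\<Sum>j\<in>{m..<N}. (lam (Suc j) - x0) * (d j)^2)"
      unfolding QK NK by (simp add: sum_distrib_left sum_subtractf algebra_simps)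
    also have "\<dots> > 0"
    proof (rule sum_pos2[of _ j0])
      show "0 < (lam (Suc j0) - x0) * (d j0)^2" using j0 lamgt unfolding N_def by auto
      fix j assume "j \<in> {m..<N}"
      thus "0 \<le> (lam (Suc j) - x0) * (d j)^2" using lamgt unfolding N_def
        by (auto intro!: mult_nonneg_nonneg simp: less_imp_le)
    qed (insert j0, auto)
    finally show ?thesis by simp
  qed
  have Qeq: "bq K wL n f f = bq K wK n f f"
    unfolding bq_def
  proof (rule sum.cong[OF refl])
    fix G assume G: "G \<in> faces (Suc n) K"
    show "wL G * cobdry K n f G * cobdry K n f G = wK G * cobdry K n f G * cobdry K n f G"
    proof (cases "G \<in> H")
      case True
      have "cobdry K n f G = 0" using cobdry_restrict[OF scH G True, of f] cobH unfolding rH_def by simp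
      thus ?thesis by simp
    next
      case False thus ?thesis using wsame G by simp
    qed
  qed
  have Nle: "ip K n uL f f \<le> ip K n wK f f"
    unfolding ip_def
  proof (rule sum_mono)
    fix F assume F: "F \<in> faces n K"
    have "uL F * (f F * f F) \<le> wK F * (f F * f F)"
      by (rule mult_right_mono, insert uleK F, auto)
    thus "uL F * f F * f F \<le> wK F * f F * f F" by (simp add: mult.assoc)
  qed
  have "x0 * ip K n uL f f \<le> x0 * ip K n wK f f" by (rule mult_left_mono[OF Nle x0])
  thus False using QKgt Qeq QLle by simp
qed





lemma sum_sub_faces: assumes sc: "simplicial_complex K" and G: "G \<in> faces (Suc n) K"
  shows "(\<Sum>v\<in>G. h (G - {v})) = (\<Sum>F\<in>{F\<in>faces n K. F \<subseteq> G}. (h F :: real))"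
proof (rule sum.reindex_bij_witness[of _ "\<lambda>F. the_elem (G - F)" "\<lambda>v. G - {v}"])
  fix v assume v: "v \<in> G"
  show "the_elem (G - (G - {v})) = v" using v by (subgoal_tac "G - (G - {v}) = {v}", auto)
  show "G - {v} \<in> {F \<in> faces n K. F \<subseteq> G}" using sub_face[OF sc G v] by auto
  show "h (G - {v}) = h (G - {v})" ..
next
  fix F assume F: "F \<in> {F \<in> faces n K. F \<subseteq> G}"
  then obtain v where v: "v \<in> G" "G - F = {v}" "F = G - {v}" using face_diff[OF sc G] by blast
  show "G - {the_elem (G - F)} = F" "the_elem (G - F) \<in> G" using v by auto
qed

lemma sq_sign: "((-1::real) ^ k * x)^2 = x^2"
  by (cases "even k") (simp_all add: power_mult_distrib)

lemma qbound:
  fixes K :: "'v::linorder set set" and w :: "'v set \<Rightarrow> real"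
  assumes sc: "simplicial_complex K"
    and wnn1: "\<forall>F\<in>faces n K. 0 \<le> w F" and wnn2: "\<forall>G\<in>faces (Suc n) K. 0 \<le> w G"
    and norm: "normalizing K w n"
  shows "bq K w n f f \<le> (real n + 2) * ip K n w f f"
proof -
  define sG where "sG F = (\<Sum>G\<in>faces (Suc n) K. if F \<subseteq> G then w G else 0)" for F
  have step1: "(cobdry K n f G)^2 \<le> (real n + 2) * (\<Sum>F\<in>faces n K. if F \<subseteq> G then (f F)^2 else 0)"
    if G: "G \<in> faces (Suc n) K" for G
  proof -
    have cG: "card G = Suc (Suc n)" using G by (simp add: faces_iff)
    have "(cobdry K n f G)^2 = (\<Sum>v\<in>G. (-1) ^ vidx v G * f (G - {v}))^2" using G unfolding cobdry_def by simp
    also have "\<dots> \<le> (\<Sum>v\<in>G. ((-1) ^ vidx v G * f (G - {v}))^2) * card G"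
      by (rule sum_squared_le_sum_of_squares)
    also have "(\<Sum>v\<in>G. ((-1) ^ vidx v G * f (G - {v}))^2) = (\<Sum>v\<in>G. (f (G - {v}))^2)"
      by (simp add: sq_sign)
    also have "\<dots> = (\<Sum>F\<in>{F\<in>faces n K. F \<subseteq> G}. (f F)^2)" by (rule sum_sub_faces[OF sc G])
    also have "\<dots> = (\<Sum>F\<in>faces n K. if F \<subseteq> G then (f F)^2 else 0)"
      by (rule sum.inter_filter[OF finite_faces[OF sc]])
    finally show ?thesis using cG by (simp add: algebra_simps)
  qed
  have A: "bq K w n f f \<le> (\<Sum>G\<in>faces (Suc n) K. w G * ((real n + 2) * (\<Sum>F\<in>faces n K. if F \<subseteq> G then (f F)^2 else 0)))"
    unfolding bq_def
  proof (rule sum_mono)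
    fix G assume G: "G \<in> faces (Suc n) K"
    have "w G * (cobdry K n f G)^2 \<le> w G * ((real n + 2) * (\<Sum>F\<in>faces n K. if F \<subseteq> G then (f F)^2 else 0))"
      by (rule mult_left_mono[OF step1[OF G]], insert wnn2 G, auto)
    thus "w G * cobdry K n f G * cobdry K n f G \<le> w G * ((real n + 2) * (\<Sum>F\<in>faces n K. if F \<subseteq> G then (f F)^2 else 0))"
      by (simp add: power2_eq_square mult.assoc)
  qed
  also have "\<dots> = (real n + 2) * (\<Sum>G\<in>faces (Suc n) K. \<Sum>F\<in>faces n K. if F \<subseteq> G then w G * (f F)^2 else 0)"
    by (simp add: sum_distrib_left ac_simps if_distrib cong: if_cong)
  finally have A2: "bq K w n f f \<le> (real n + 2) * (\<Sum>G\<in>faces (Suc n) K. \<Sum>F\<in>faces n K. if F \<subseteq> G then w G * (f F)^2 else 0)" .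
  have "(\<Sum>G\<in>faces (Suc n) K. \<Sum>F\<in>faces n K. if F \<subseteq> G then w G * (f F)^2 else 0)
     = (\<Sum>F\<in>faces n K. \<Sum>G\<in>faces (Suc n) K. if F \<subseteq> G then w G * (f F)^2 else 0)" by (rule sum.swap)
  also have "\<dots> = (\<Sum>F\<in>faces n K. (f F)^2 * sG F)"
    unfolding sG_def by (rule sum.cong[OF refl], simp add: sum_distrib_left if_distrib ac_simps cong: if_cong)
  also have "\<dots> \<le> (\<Sum>F\<in>faces n K. (f F)^2 * w F)"
  proof (rule sum_mono)
    fix F assume F: "F \<in> faces n K"
    have cF: "card F = Suc n" and FK: "F \<in> K" using F by (auto simp: faces_iff)
    have eqset: "{G\<in>faces (Suc n) K. F \<subseteq> G} = {G\<in>faces (Suc n) K. F \<subset> G}"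
      using cF by (auto simp: faces_iff)
    have "sG F = (\<Sum>G\<in>{G\<in>faces (Suc n) K. F \<subseteq> G}. w G)"
      unfolding sG_def by (rule sum.inter_filter[OF finite_faces[OF sc], symmetric])
    also have "\<dots> = (\<Sum>G\<in>{G\<in>faces (Suc n) K. F \<subset> G}. w G)" unfolding eqset ..
    also have "\<dots> \<le> w F"
    proof (cases "is_facet K F")
      case True
      hence E: "{G\<in>faces (Suc n) K. F \<subset> G} = {}" unfolding is_facet_def by (auto simp: faces_iff)
      show ?thesis unfolding E using wnn1 F by simp
    next
      case False
      thus ?thesis using norm F unfolding normalizing_def by simp
    qed
    finally have "sG F \<le> w F" .
    thus "(f F)^2 * sG F \<le> (f F)^2 * w F" by (rule mult_left_mono, simp)
  qed
  also have "(\<Sum>F\<in>faces n K. (f F)^2 * w F) = ip K n w f f"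
    unfolding ip_def by (rule sum.cong[OF refl], simp add: power2_eq_square ac_simps)
  finally have "(\<Sum>G\<in>faces (Suc n) K. \<Sum>F\<in>faces n K. if F \<subseteq> G then w G * (f F)^2 else 0) \<le> ip K n w f f" .
  hence "(real n + 2) * (\<Sum>G\<in>faces (Suc n) K. \<Sum>F\<in>faces n K. if F \<subseteq> G then w G * (f F)^2 else 0) \<le> (real n + 2) * ip K n w f f"
    by (rule mult_left_mono, simp)
  thus ?thesis by (rule order_trans[OF A2])
qed


theorem theorem2p11:
  fixes K H :: "'v::linorder set set"
    and wK wH :: "'v set \<Rightarrow> real"
    and n :: nat
    and lam theta :: "nat \<Rightarrow> real"
  assumes "weighted_complex K wK" and "complex_dim K (Suc n)"
    and "weighted_complex H wH" and "complex_dim H (Suc n)"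
    and "sub_wcomplex H wH K wK"
    and "proper_difference_exists K wK H wH"
    and "normalizing K wK n"
    and "normalizing K (diff_weight K wK H wH) n"
    and "sorted_eigenvalues (up_laplacian_matrix K wK n) (card (faces n K)) lam"
    and "sorted_eigenvalues (up_laplacian_matrix K (diff_weight K wK H wH) n)
           (card (faces n K)) theta"
  shows "\<forall>k\<in>{1..card (faces n K)}.
     ext_eig (card (faces n K)) (real n + 2) lam
        (int k - int (rdim (cochains (Suc n) H) - cohom_dim (Suc n) H)) \<le> theta k \<and>
     theta k \<le> ext_eig (card (faces n K)) (real n + 2) lam
        (int k + int (rdim (cochains n H)))"
proof -
  define wL where "wL = diff_weight K wK H wH"
  define N where "N = card (faces n K)"
  have sc: "simplicial_complex K" and wKpos: "\<forall>F\<in>K. wK F > 0"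
    using assms(1) unfolding weighted_complex_def by auto
  have scH: "simplicial_complex H" and HK: "H \<subseteq> K" and wHle: "\<forall>F\<in>H. wH F \<le> wK F"
    using assms(5) unfolding sub_wcomplex_def by auto
  have wHpos: "\<forall>F\<in>H. wH F > 0" using assms(3) unfolding weighted_complex_def by auto
  have Hdim: "\<forall>F\<in>H. card F \<le> Suc (Suc n)" using assms(4) unfolding complex_dim_def by auto
  have scP: "simplicial_complex {F\<in>K. wL F > 0}"
    using assms(6) unfolding proper_difference_exists_def wL_def .
  have wLK: "F \<in> K \<Longrightarrow> wL F = wK F - (if F \<in> H then wH F else 0)" for F
    unfolding wL_def diff_weight_def by simp
  have wLnn: "F \<in> K \<Longrightarrow> 0 \<le> wL F" for F
    using wLK[of F] wHle wKpos by (cases "F \<in> H") (auto simp: less_imp_le)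
  have wLle: "F \<in> K \<Longrightarrow> wL F \<le> wK F" for F
    using wLK[of F] wHpos by (cases "F \<in> H") (auto simp: less_imp_le)
  have inK: "F \<in> faces j K \<Longrightarrow> F \<in> K" for F j by (simp add: faces_iff)
  have wsame: "\<forall>G\<in>faces (Suc n) K. G \<notin> H \<longrightarrow> wL G = wK G" using wLK inK by auto
  define uL where "uL F = (if wL F \<noteq> 0 then wL F else wK F)" for F
  have uLpos: "\<forall>F\<in>faces n K. uL F > 0"
  proof
    fix F assume F: "F \<in> faces n K"
    hence FK: "F \<in> K" by (rule inK)
    show "uL F > 0" using wLnn[OF FK] wKpos FK unfolding uL_def by (cases "wL F = 0") auto
  qed
  have uLw: "\<forall>F\<in>faces n K. wL F \<noteq> 0 \<longrightarrow> uL F = wL F" unfolding uL_def by simp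
  have zcL: "\<forall>F\<in>faces n K. wL F = 0 \<longrightarrow> (\<forall>G\<in>faces (Suc n) K. F \<subseteq> G \<longrightarrow> wL G = 0)"
  proof (intro ballI impI)
    fix F G assume F: "F \<in> faces n K" and w0: "wL F = 0" and G: "G \<in> faces (Suc n) K" and FG: "F \<subseteq> G"
    show "wL G = 0"
    proof (rule ccontr)
      assume "wL G \<noteq> 0"
      hence "wL G > 0" using wLnn[OF inK[OF G]] by simp
      hence GP: "G \<in> {F\<in>K. wL F > 0}" using inK[OF G] by simp
      have "card F = Suc n" using F by (simp add: faces_iff)
      hence "F \<noteq> {}" by auto
      hence "F \<in> {F\<in>K. wL F > 0}" by (rule sc_closed[OF scP GP FG])
      thus False using w0 by simp
    qed
  qed
  have usame: "\<forall>F\<in>faces n K. F \<notin> H \<longrightarrow> uL F = wK F"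
    using wLK wKpos inK unfolding uL_def by force
  have uleK: "\<forall>F\<in>faces n K. uL F \<le> wK F" using wLle inK unfolding uL_def by auto
  have wLuL: "\<forall>F\<in>faces n K. wL F \<le> uL F" using wLnn inK wKpos unfolding uL_def by (auto simp: less_imp_le)
  have wKpos': "\<forall>F\<in>faces n K. wK F > 0" using wKpos inK by blast
  have "\<exists>phi. ebasis K n wK wK lam phi"
    unfolding ebasis_def
    by (rule eigen_basis[OF sc wKpos']) (insert wKpos' assms(9), auto)
  then obtain phiK where eK: "ebasis K n wK wK lam phiK" by blast
  have "\<exists>phi. ebasis K n wL uL theta phi"
    unfolding ebasis_def
    by (rule eigen_basis[OF sc uLpos uLw zcL]) (insert assms(10), simp add: wL_def)
  then obtain phiL where eL: "ebasis K n wL uL theta phiL" by blast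
  have slam: "1 \<le> i \<Longrightarrow> i \<le> j \<Longrightarrow> j \<le> N \<Longrightarrow> lam i \<le> lam j" for i j
    using assms(9) unfolding sorted_eigenvalues_def N_def by blast
  have sth: "1 \<le> i \<Longrightarrow> i \<le> j \<Longrightarrow> j \<le> N \<Longrightarrow> theta i \<le> theta j" for i j
    using assms(10) unfolding sorted_eigenvalues_def N_def wL_def by blast
  have bqL: "\<forall>j<N. \<forall>k<N. bq K wL n (phiL j) (phiL k) = (if j = k then theta (Suc j) else 0)"
    using eL unfolding ebasis_def N_def by blast
  have ipL: "\<forall>j<N. \<forall>k<N. ip K n uL (phiL j) (phiL k) = (if j = k then 1 else 0)"
    using eL unfolding ebasis_def N_def by blast
  have th_eq: "1 \<le> k \<Longrightarrow> k \<le> N \<Longrightarrow> theta k = bq K wL n (phiL (k - 1)) (phiL (k - 1))" for k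
  proof -
    assume k: "1 \<le> k" "k \<le> N"
    hence j: "k - 1 < N" by simp
    have "bq K wL n (phiL (k - 1)) (phiL (k - 1)) = theta (Suc (k - 1))" using bqL j by simp
    thus ?thesis using k by simp
  qed
  have ip1: "1 \<le> k \<Longrightarrow> k \<le> N \<Longrightarrow> ip K n uL (phiL (k - 1)) (phiL (k - 1)) = 1" for k
  proof -
    assume k: "1 \<le> k" "k \<le> N"
    hence j: "k - 1 < N" by simp
    show ?thesis using ipL j by simp
  qed
  have th_nn: "1 \<le> k \<Longrightarrow> k \<le> N \<Longrightarrow> 0 \<le> theta k" for k
    unfolding th_eq bq_def
    by (rule sum_nonneg, insert wLnn inK, auto simp: mult.assoc intro!: mult_nonneg_nonneg)
  have th_le: "1 \<le> k \<Longrightarrow> k \<le> N \<Longrightarrow> theta k \<le> real n + 2" for k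
  proof -
    assume k: "1 \<le> k" "k \<le> N"
    let ?p = "phiL (k - 1)"
    have "theta k = bq K wL n ?p ?p" by (rule th_eq[OF k])
    also have "\<dots> \<le> (real n + 2) * ip K n wL ?p ?p"
      by (rule qbound[OF sc], insert wLnn inK assms(8), auto simp: wL_def)
    also have "ip K n wL ?p ?p \<le> ip K n uL ?p ?p"
      unfolding ip_def
    proof (rule sum_mono)
      fix F assume F: "F \<in> faces n K"
      have "wL F * (?p F * ?p F) \<le> uL F * (?p F * ?p F)" by (rule mult_right_mono, insert wLuL F, auto)
      thus "wL F * ?p F * ?p F \<le> uL F * ?p F * ?p F" by (simp add: mult.assoc)
    qed
    hence "(real n + 2) * ip K n wL ?p ?p \<le> (real n + 2) * ip K n uL ?p ?p" by (rule mult_left_mono, simp)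
    finally show ?thesis using ip1[OF k] by simp
  qed
  have DH: "rdim (cochains n H) = card (faces n H)" by (rule rdim_cochains[OF finite_faces[OF scH]])
  define V where "V = coboundaries (Suc n) H"
  have Vsub: "V \<subseteq> cochains (Suc n) H"
    unfolding V_def coboundaries_def cochains_def by (auto simp: cobdry_def)
  have noface: "faces (Suc (Suc n)) H = {}"
  proof (rule equals0I)
    fix F assume "F \<in> faces (Suc (Suc n)) H"
    hence FH: "F \<in> H" and cF: "card F = Suc (Suc (Suc n))" by (auto simp: faces_iff)
    from Hdim FH have "card F \<le> Suc (Suc n)" by blast
    thus False using cF by simp
  qed
  have cocyc: "cocycles (Suc n) H = cochains (Suc n) H"
    unfolding cocycles_def cobdry_def noface by simp
  have finF1: "finite (faces (Suc n) H)" by (rule finite_faces[OF scH])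
  have Vspan: "V \<subseteq> fvs.span (ind ` faces (Suc n) H)" using Vsub cochains_span[OF finF1] by simp
  have dimV: "rdim V \<le> rdim (cochains (Suc n) H)"
  proof -
    have "rdim V \<le> card (ind ` faces (Suc n) H)" unfolding rdim_def
      by (rule fvs.dim_le_card[OF Vspan], simp add: finF1)
    also have "\<dots> \<le> card (faces (Suc n) H)" by (rule card_image_le[OF finF1])
    finally show ?thesis using rdim_cochains[OF finF1] by simp
  qed
  have DW: "rdim (cochains (Suc n) H) - cohom_dim (Suc n) H = rdim V"
    unfolding cohom_dim_def cocyc V_def[symmetric] using dimV by simp
  obtain Bs where Bs: "Bs \<subseteq> V" "fvs.independent Bs" "V \<subseteq> fvs.span Bs" "card Bs = fvs.dim V"
    by (rule fvs.basis_exists)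
  have finBs: "finite Bs"
    using fvs.independent_span_bound[OF _ Bs(2), of "ind ` faces (Suc n) H"] Bs(1) Vspan finF1 by auto
  have cardBs: "card Bs = rdim V" using Bs(4) unfolding rdim_def by simp
  have VBs: "coboundaries (Suc n) H \<subseteq> fvs.span Bs" using Bs(3) unfolding V_def .
  show ?thesis unfolding DW DH N_def[symmetric]
  proof (intro ballI conjI)
    fix k assume "k \<in> {1..N}"
    hence k1: "1 \<le> k" and kN: "k \<le> N" by auto
    show "ext_eig N (real n + 2) lam (int k - int (rdim V)) \<le> theta k"
    proof (cases "int k - int (rdim V) \<le> 0")
      case True thus ?thesis using th_nn[OF k1 kN] by (simp add: ext_eig_def)
    next
      case False
      hence Dk: "rdim V < k" by simp
      have nat_eq: "nat (int k - int (rdim V)) = k - rdim V" using Dk by simp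
      have ext: "ext_eig N (real n + 2) lam (int k - int (rdim V)) = lam (k - rdim V)"
        unfolding ext_eig_def using False kN nat_eq by simp
      show ?thesis unfolding ext
      proof (rule ccontr)
        assume "\<not> lam (k - rdim V) \<le> theta k"
        hence lt: "theta k < lam (k - rdim V)" by simp
        have mN: "k \<le> card (faces n K)" using kN unfolding N_def .
        have mm: "(k - rdim V - 1) + card Bs < k" using Dk cardBs by simp
        have x0: "0 \<le> theta k" by (rule th_nn[OF k1 kN])
        have thle: "\<forall>j<k. theta (Suc j) \<le> theta k" using sth kN by auto
        have lamgt: "\<forall>j. k - rdim V - 1 \<le> j \<longrightarrow> j < card (faces n K) \<longrightarrow> theta k < lam (Suc j)"
        proof (intro allI impI)
          fix j assume j1: "k - rdim V - 1 \<le> j" and j2: "j < card (faces n K)"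
          have "lam (k - rdim V) \<le> lam (Suc j)" by (rule slam, insert Dk j1 j2, auto simp: N_def)
          thus "theta k < lam (Suc j)" using lt by simp
        qed
        show False by (rule lb_core[OF sc scH eK eL wsame uleK finBs VBs mN mm x0 thle lamgt])
      qed
    qed
  next
    fix k assume "k \<in> {1..N}"
    hence k1: "1 \<le> k" and kN: "k \<le> N" by auto
    show "theta k \<le> ext_eig N (real n + 2) lam (int k + int (card (faces n H)))"
    proof (cases "k + card (faces n H) > N")
      case True
      hence "ext_eig N (real n + 2) lam (int k + int (card (faces n H))) = real n + 2" unfolding ext_eig_def using k1 by simp
      thus ?thesis using th_le[OF k1 kN] by simp
    next
      case False
      hence ext: "ext_eig N (real n + 2) lam (int k + int (card (faces n H))) = lam (k + card (faces n H))"
        unfolding ext_eig_def using k1 by (simp add: nat_add_distrib)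
      show ?thesis unfolding ext
      proof (rule ccontr)
        assume "\<not> theta k \<le> lam (k + card (faces n H))"
        hence lt: "lam (k + card (faces n H)) < theta k" by simp
        have mN: "k + card (faces n H) \<le> card (faces n K)" using False unfolding N_def by simp
        have mm: "(k - 1) + card (faces n H) < k + card (faces n H)" using k1 by simp
        have lamle: "\<forall>j<k + card (faces n H). lam (Suc j) \<le> lam (k + card (faces n H))" using slam False by auto
        have thgt: "\<forall>j. k - 1 \<le> j \<longrightarrow> j < card (faces n K) \<longrightarrow> lam (k + card (faces n H)) < theta (Suc j)"
        proof (intro allI impI)
          fix j assume j1: "k - 1 \<le> j" and j2: "j < card (faces n K)"
          have "theta k \<le> theta (Suc j)" by (rule sth, insert k1 j1 j2, auto simp: N_def)
          thus "lam (k + card (faces n H)) < theta (Suc j)" using lt by simp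
        qed
        show False by (rule ub_core[OF sc scH eK eL wsame usame mN mm lamle thgt])
      qed
    qed
  qed
qed


end
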